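(* Let $L$ be a finite unramified extension of $\mathbb Q_\ell$ with ring of integers $S$, let $f_1\in S[t]$ be monic of degree $d_1$ with $f_1\equiv t^{d_1}\pmod\ell$, $R=S[t]/f_1S[t]$, $x$ the image of $t$. Let $T$ be an $R$-module that is free of finite rank over $S$, generated over $R$ by $r$ elements, with $\mathrm{Hp}(x|T)=(m_1,\dots,m_r)$, and let $f$ be the characteristic polynomial of $x$ on $T$. Then there exist $r\times r$ matrices $X,Y$ over $S[t]$ with $YX=f_1\cdot I_r$ and $\det X=f$ such that $T$ has the presentation $S[t]^r\xrightarrow{X}S[t]^r\to T\to0$ and $X\equiv\mathrm{diag}(t^{m_1},\dots,t^{m_r})\pmod\ell$.
   Context: $\mathrm{Hp}(x|T)=(m_1,\dots,m_r)$ means that the nilpotent endomorphism of the $S/\ell S$-vector space $T/\ell T$ induced by $x$ has Jordan blocks of sizes $m_1\ge\dots\ge m_r$ (its Young polygon has vertices $(\sum_{j\le i}m_j,i)$). *)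

theory Defs
  imports "Jordan_Normal_Form.Jordan_Normal_Form" "HOL-Computational_Algebra.Primes"
begin

text \<open>S is (abstractly) the ring of integers of a finite unramified extension of Q_l:
  a characteristic-0 domain that is a discrete valuation ring with uniformizer l,
  complete for the l-adic topology, with finite residue field S / l S.\<close>
definition unramified_int_ring :: "nat \<Rightarrow> 'a :: {idom, ring_char_0} itself \<Rightarrow> bool" where
  "unramified_int_ring l _ \<longleftrightarrow>
     prime l \<and>
     \<not> ((of_nat l :: 'a) dvd 1) \<and>
     (\<forall>s :: 'a. s \<noteq> 0 \<longrightarrow> (\<exists>u k. u dvd 1 \<and> s = u * of_nat l ^ k)) \<and>
     (\<forall>s :: nat \<Rightarrow> 'a. (\<forall>n. (of_nat l) ^ n dvd s (Suc n) - s n) \<longrightarrow>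
         (\<exists>y. \<forall>n. (of_nat l) ^ n dvd y - s n)) \<and>
     (\<exists>C :: 'a set. finite C \<and> (\<forall>s. \<exists>c\<in>C. of_nat l dvd s - c))"

text \<open>pi : S -> k is a reduction map onto a residue field, i.e. a surjective ring
  homomorphism with kernel l S (so k = S / l S).\<close>
definition residue_map :: "nat \<Rightarrow> ('a :: comm_ring_1 \<Rightarrow> 'k :: field) \<Rightarrow> bool" where
  "residue_map l \<pi> \<longleftrightarrow>
     (\<forall>a b. \<pi> (a + b) = \<pi> a + \<pi> b) \<and> (\<forall>a b. \<pi> (a * b) = \<pi> a * \<pi> b) \<and> \<pi> 1 = 1 \<and>
     surj \<pi> \<and> (\<forall>a. \<pi> a = 0 \<longleftrightarrow> of_nat l dvd a)"

definition poly_cong_l :: "nat \<Rightarrow> 'a :: comm_ring_1 poly \<Rightarrow> 'a poly \<Rightarrow> bool" where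
  "poly_cong_l l p q \<longleftrightarrow> (\<forall>k. (of_nat l :: 'a) dvd coeff (p - q) k)"

fun horner_mat :: "'a :: comm_ring_1 mat \<Rightarrow> 'a list \<Rightarrow> 'a mat" where
  "horner_mat A [] = 0\<^sub>m (dim_row A) (dim_row A)"
| "horner_mat A (c # cs) = c \<cdot>\<^sub>m 1\<^sub>m (dim_row A) + A * horner_mat A cs"

definition mat_eval_poly :: "'a :: comm_ring_1 mat \<Rightarrow> 'a poly \<Rightarrow> 'a mat" where
  "mat_eval_poly A p = horner_mat A (coeffs p)"

text \<open>The S[t]-linear map S[t]^r -> S^n, (q_i) |-> sum_i q_i(A) v_i, where t acts by A.\<close>
definition pres_map :: "'a :: comm_ring_1 mat \<Rightarrow> 'a vec list \<Rightarrow> 'a poly vec \<Rightarrow> 'a vec" where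
  "pres_map A vs q =
     foldr (+) (map (\<lambda>i. mat_eval_poly A (q $ i) *\<^sub>v (vs ! i)) [0..<length vs]) (0\<^sub>v (dim_row A))"

text \<open>Hp(N) = ms: ms is a weakly decreasing list whose nonzero entries are the sizes of the
  Jordan blocks of the nilpotent matrix N (zero entries pad the list).\<close>
definition Hp_is :: "'k :: field mat \<Rightarrow> nat list \<Rightarrow> bool" where
  "Hp_is N ms \<longleftrightarrow> sorted (rev ms) \<and>
     jordan_nf N (map (\<lambda>m. (m, 0)) (filter (\<lambda>m. m \<noteq> 0) ms))"

end

theory Submission
  imports Defs
begin

lemma pow_mat_comm: assumes A: "A \<in> carrier_mat n n"
  shows "A * A ^\<^sub>m j = A ^\<^sub>m j * A"
proof (induct j)
  case 0 then show ?case using A by simp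
next
  case (Suc j)
  have "A * A ^\<^sub>m Suc j = (A * A ^\<^sub>m j) * A"
    using A by (simp add: assoc_mult_mat[of A n n "A ^\<^sub>m j" n A n])
  also have "\<dots> = A ^\<^sub>m Suc j * A" using Suc by simp
  finally show ?case .
qed

lemma pow_mat_vec_Suc: assumes A: "A \<in> carrier_mat n n" and w: "w \<in> carrier_vec n"
  shows "A *\<^sub>v (A ^\<^sub>m j *\<^sub>v w) = A ^\<^sub>m Suc j *\<^sub>v w"
proof -
  have "A *\<^sub>v (A ^\<^sub>m j *\<^sub>v w) = (A * A ^\<^sub>m j) *\<^sub>v w"
    using A w by (simp add: assoc_mult_mat_vec[of A n n "A ^\<^sub>m j" n w])
  also have "\<dots> = A ^\<^sub>m Suc j *\<^sub>v w" using pow_mat_comm[OF A] by simp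
  finally show ?thesis .
qed

lemma horner_carrier: "A \<in> carrier_mat n n \<Longrightarrow> horner_mat A cs \<in> carrier_mat n n"
  by (induct cs) auto

lemma mat_eval_poly_carrier: "A \<in> carrier_mat n n \<Longrightarrow> mat_eval_poly A p \<in> carrier_mat n n"
  unfolding mat_eval_poly_def by (rule horner_carrier)

lemma mat_eval_poly_0: "A \<in> carrier_mat n n \<Longrightarrow> mat_eval_poly A 0 = 0\<^sub>m n n"
  unfolding mat_eval_poly_def by auto

lemma mat_eval_poly_pCons: assumes A: "A \<in> carrier_mat n n"
  shows "mat_eval_poly A (pCons c q) = c \<cdot>\<^sub>m 1\<^sub>m n + A * mat_eval_poly A q"
proof (cases "q = 0 \<and> c = 0")
  case True
  then show ?thesis using A by (auto simp: mat_eval_poly_def)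
next
  case False
  then have "coeffs (pCons c q) = c # coeffs q" by (auto simp: cCons_def)
  then show ?thesis using A unfolding mat_eval_poly_def by simp
qed

lemma smult_one_mat_vec: fixes c :: "'a :: comm_ring_1" assumes w: "w \<in> carrier_vec n"
  shows "(c \<cdot>\<^sub>m 1\<^sub>m n) *\<^sub>v w = c \<cdot>\<^sub>v w"
proof (rule eq_vecI)
  fix i assume "i < dim_vec (c \<cdot>\<^sub>v w)"
  then have i: "i < n" using w by simp
  have "((c \<cdot>\<^sub>m 1\<^sub>m n) *\<^sub>v w) $ i = (\<Sum>k\<in>{0..<n}. (if k = i then c * w $ k else 0))"
  proof -
    have "((c \<cdot>\<^sub>m 1\<^sub>m n) *\<^sub>v w) $ i = (\<Sum>k\<in>{0..<n}. c * (if k = i then 1 else 0) * w $ k)"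
      using i w by (simp add: scalar_prod_def)
    also have "\<dots> = (\<Sum>k\<in>{0..<n}. (if k = i then c * w $ k else 0))" by (rule sum.cong) auto
    finally show ?thesis .
  qed
  also have "\<dots> = c * w $ i" using i by simp
  finally show "((c \<cdot>\<^sub>m 1\<^sub>m n) *\<^sub>v w) $ i = (c \<cdot>\<^sub>v w) $ i" using i w by simp
qed (use w in simp)

lemma mat_vec_index_sum: assumes A: "A \<in> carrier_mat n n" and v: "v \<in> carrier_vec n" and a: "a < n"
  shows "(A *\<^sub>v v) $ a = (\<Sum>b<n. A $$ (a,b) * v $ b)"
  using A v a by (auto simp: scalar_prod_def atLeast0LessThan)

lemma EV_formula:
  assumes A: "A \<in> carrier_mat n n" and w: "w \<in> carrier_vec n"
  shows "a < n \<Longrightarrow> \<forall>j\<ge>N. coeff p j = 0 \<Longrightarrow>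
    (mat_eval_poly A p *\<^sub>v w) $ a = (\<Sum>j<N. coeff p j * (A ^\<^sub>m j *\<^sub>v w) $ a)"
proof (induct N arbitrary: p a)
  case 0
  then have "p = 0" by (intro poly_eqI) auto
  then show ?case using A w 0 by (simp add: mat_eval_poly_0)
next
  case (Suc N)
  obtain c q where p: "p = pCons c q" by (cases p)
  have q0: "\<forall>j\<ge>N. coeff q j = 0" using Suc(3) unfolding p by auto
  have Eq: "mat_eval_poly A q \<in> carrier_mat n n" by (rule mat_eval_poly_carrier[OF A])
  have IH: "\<And>b. b < n \<Longrightarrow> (mat_eval_poly A q *\<^sub>v w) $ b = (\<Sum>j<N. coeff q j * (A ^\<^sub>m j *\<^sub>v w) $ b)"
    using Suc(1) q0 by blast
  have "mat_eval_poly A p *\<^sub>v w = c \<cdot>\<^sub>v w + A *\<^sub>v (mat_eval_poly A q *\<^sub>v w)"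
    unfolding p mat_eval_poly_pCons[OF A] using A w Eq
    by (simp add: add_mult_distrib_mat_vec[of _ n n] assoc_mult_mat_vec[of _ n n _ n], simp add: smult_one_mat_vec)
  then have "(mat_eval_poly A p *\<^sub>v w) $ a = c * w $ a + (A *\<^sub>v (mat_eval_poly A q *\<^sub>v w)) $ a"
    using A w Eq Suc(2) by simp
  also have "(A *\<^sub>v (mat_eval_poly A q *\<^sub>v w)) $ a = (\<Sum>b<n. A $$ (a,b) * (\<Sum>j<N. coeff q j * (A ^\<^sub>m j *\<^sub>v w) $ b))"
    using mat_vec_index_sum[OF A _ Suc(2), of "mat_eval_poly A q *\<^sub>v w"] IH Eq w by simp
  also have "\<dots> = (\<Sum>j<N. coeff q j * (\<Sum>b<n. A $$ (a,b) * (A ^\<^sub>m j *\<^sub>v w) $ b))"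
    by (simp add: sum_distrib_left sum.swap[of _ "{..<n}"] mult.left_commute)
  also have "\<dots> = (\<Sum>j<N. coeff q j * (A ^\<^sub>m Suc j *\<^sub>v w) $ a)"
    using mat_vec_index_sum[OF A _ Suc(2)] pow_mat_vec_Suc[OF A w] A w
    by (intro sum.cong refl) (metis mult_mat_vec_carrier pow_carrier_mat)
  also have "c * w $ a = coeff p 0 * (A ^\<^sub>m 0 *\<^sub>v w) $ a" using A w Suc(2) unfolding p by simp
  also have "(\<Sum>j<N. coeff q j * (A ^\<^sub>m Suc j *\<^sub>v w) $ a) = (\<Sum>j<N. coeff p (Suc j) * (A ^\<^sub>m Suc j *\<^sub>v w) $ a)"
    unfolding p by simp
  also have "coeff p 0 * (A ^\<^sub>m 0 *\<^sub>v w) $ a + \<dots> = (\<Sum>j<Suc N. coeff p j * (A ^\<^sub>m j *\<^sub>v w) $ a)"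
    by (rule sum.lessThan_Suc_shift[symmetric])
  finally show ?case .
qed

lemma foldr_vec_sum: assumes "set xs \<subseteq> carrier_vec n"
  shows "foldr (+) xs (0\<^sub>v n) \<in> carrier_vec n \<and> (\<forall>a<n. foldr (+) xs (0\<^sub>v n) $ a = sum_list (map (\<lambda>v. v $ a) xs))"
  using assms by (induct xs) auto

lemma pres_map_carrier: assumes A: "A \<in> carrier_mat n n" and vs: "set vs \<subseteq> carrier_vec n"
  shows "pres_map A vs q \<in> carrier_vec n"
proof -
  have "set (map (\<lambda>i. mat_eval_poly A (q $ i) *\<^sub>v vs ! i) [0..<length vs]) \<subseteq> carrier_vec n"
    using mat_eval_poly_carrier[OF A] vs by (auto intro!: mult_mat_vec_carrier)
  from foldr_vec_sum[OF this] show ?thesis unfolding pres_map_def using A by simp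
qed

lemma pres_map_formula: assumes A: "A \<in> carrier_mat n n" and vs: "set vs \<subseteq> carrier_vec n"
  and a: "a < n" and N: "\<forall>i<length vs. \<forall>j\<ge>N. coeff (q $ i) j = 0"
  shows "pres_map A vs q $ a = (\<Sum>i<length vs. \<Sum>j<N. coeff (q $ i) j * (A ^\<^sub>m j *\<^sub>v vs ! i) $ a)"
proof -
  have "set (map (\<lambda>i. mat_eval_poly A (q $ i) *\<^sub>v vs ! i) [0..<length vs]) \<subseteq> carrier_vec n"
    using mat_eval_poly_carrier[OF A] vs by (auto intro!: mult_mat_vec_carrier)
  from foldr_vec_sum[OF this] a
  have "pres_map A vs q $ a = (\<Sum>i<length vs. (mat_eval_poly A (q $ i) *\<^sub>v vs ! i) $ a)"
    unfolding pres_map_def using A by (simp add: sum_list_sum_nth atLeast0LessThan)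
  also have "\<dots> = (\<Sum>i<length vs. \<Sum>j<N. coeff (q $ i) j * (A ^\<^sub>m j *\<^sub>v vs ! i) $ a)"
  proof (intro sum.cong refl)
    fix i assume i: "i \<in> {..<length vs}"
    show "(mat_eval_poly A (q $ i) *\<^sub>v vs ! i) $ a = (\<Sum>j<N. coeff (q $ i) j * (A ^\<^sub>m j *\<^sub>v vs ! i) $ a)"
      by (rule EV_formula[OF A _ a]) (use vs N i in auto)
  qed
  finally show ?thesis .
qed



locale blk =
  fixes ms :: "nat list" and r' :: nat
  assumes r'_le: "r' \<le> length ms" and pos_m: "\<And>i. i < r' \<Longrightarrow> 0 < ms ! i"
begin

definition s :: "nat \<Rightarrow> nat" where "s i = (\<Sum>k<i. ms ! k)"
definition nn :: nat where "nn = s r'"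
definition D :: "(nat \<times> nat) set" where "D = Sigma {..<r'} (\<lambda>i. {..<ms ! i})"
definition pos :: "nat \<times> nat \<Rightarrow> nat" where
  "pos = (\<lambda>(i,j). if j = 0 then i else r' + (s i - i) + (j - 1))"
definition ipos :: "nat \<Rightarrow> nat \<times> nat" where "ipos = inv_into D pos"
definition jc :: "nat \<times> nat \<Rightarrow> nat" where "jc = (\<lambda>(i,j). s i + (ms ! i - 1 - j))"

lemma s_Suc: "s (Suc i) = s i + ms ! i" unfolding s_def by simp

lemma s_ge: "i \<le> r' \<Longrightarrow> i \<le> s i"
proof (induct i)
  case (Suc i) then show ?case using pos_m[of i] by (simp add: s_Suc)
qed (simp add: s_def)

lemma g_mono: "i \<le> i' \<Longrightarrow> i' \<le> r' \<Longrightarrow> s i - i \<le> s i' - i'"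
proof (induct i' rule: dec_induct)
  case (step k)
  have "s k - k \<le> s (Suc k) - Suc k" using pos_m[of k] step s_ge[of k] by (simp add: s_Suc)
  then show ?case using step by simp
qed simp

lemma s_mono: "i \<le> i' \<Longrightarrow> s i \<le> s i'"
  unfolding s_def by (rule sum_mono2) auto

lemma nn_ge: "r' \<le> nn" unfolding nn_def using s_ge by simp

lemma D_iff: "(i,j) \<in> D \<longleftrightarrow> i < r' \<and> j < ms ! i" unfolding D_def by auto

lemma pos_0[simp]: "pos (i,0) = i" unfolding pos_def by simp
lemma pos_pos: "0 < j \<Longrightarrow> pos (i,j) = r' + (s i - i) + (j - 1)" unfolding pos_def by simp

lemma pos_lt: assumes "(i,j) \<in> D" shows "pos (i,j) < nn"
proof (cases "j = 0")
  case True then show ?thesis using assms nn_ge by (auto simp: D_iff)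
next
  case False
  have i: "i < r'" "j < ms ! i" using assms by (auto simp: D_iff)
  have "s (Suc i) - Suc i \<le> s r' - r'" using g_mono[of "Suc i" r'] i by simp
  moreover have "s (Suc i) - Suc i = (s i - i) + (ms ! i - 1)" using s_ge[of i] i pos_m[of i] by (simp add: s_Suc)
  ultimately show ?thesis using False i nn_ge unfolding nn_def by (simp add: pos_pos)
qed

lemma pos_ge: "0 < j \<Longrightarrow> r' \<le> pos (i,j)" by (simp add: pos_pos)

lemma pos_inj: "inj_on pos D"
proof (rule inj_onI)
  fix x y assume x: "x \<in> D" and y: "y \<in> D" and e: "pos x = pos y"
  obtain i j where xe: "x = (i,j)" by force
  obtain i' j' where ye: "y = (i',j')" by force
  have xi: "i < r'" "j < ms ! i" and yi: "i' < r'" "j' < ms ! i'" using x y xe ye by (auto simp: D_iff)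
  show "x = y"
  proof (cases "j = 0")
    case True
    then show ?thesis using e xe ye xi yi pos_ge[of j' i'] by (cases "j' = 0") auto
  next
    case False
    then have j': "j' \<noteq> 0" using e xe ye xi yi pos_ge[of j i] by (cases "j' = 0") auto
    have lt: "pos (a,b) < pos (a',b')" if "a < a'" "a' < r'" "0 < b" "b < ms ! a" "0 < b'" for a b a' b'
    proof -
      have "s (Suc a) - Suc a \<le> s a' - a'" using g_mono[of "Suc a" a'] that by simp
      moreover have "s (Suc a) - Suc a = (s a - a) + (ms ! a - 1)" using s_ge[of a] that pos_m[of a] by (simp add: s_Suc)
      ultimately show ?thesis using that by (simp add: pos_pos)
    qed
    have "i = i'"
    proof (rule ccontr)
      assume "i \<noteq> i'"
      then consider "i < i'" | "i' < i" by linarith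
      then show False
        using lt[of i i' j j'] lt[of i' i j' j] e xe ye xi yi False j' by (cases, auto)
    qed
    then show ?thesis using e xe ye False j' by (simp add: pos_pos)
  qed
qed

lemma card_D: "card D = nn"
  unfolding D_def nn_def s_def by (simp add: card_SigmaI)

lemma finite_D: "finite D" unfolding D_def by simp

lemma pos_image: "pos ` D = {..<nn}"
proof -
  have sub: "pos ` D \<subseteq> {..<nn}" using pos_lt by auto
  have "card (pos ` D) = nn" using card_image[OF pos_inj] card_D by simp
  then show ?thesis using card_subset_eq[OF _ sub] by simp
qed

lemma pos_bij: "bij_betw pos D {..<nn}"
  using pos_inj pos_image unfolding bij_betw_def by simp

lemma ipos_D: "p < nn \<Longrightarrow> ipos p \<in> D"
  unfolding ipos_def using pos_image by (auto intro!: inv_into_into)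

lemma pos_ipos: "p < nn \<Longrightarrow> pos (ipos p) = p"
  unfolding ipos_def using pos_image by (auto intro!: f_inv_into_f)

lemma ipos_pos: "x \<in> D \<Longrightarrow> ipos (pos x) = x"
  unfolding ipos_def using pos_inj by (rule inv_into_f_f)

lemma ipos_small: "b < r' \<Longrightarrow> ipos b = (b,0)"
  using ipos_pos[of "(b,0)"] pos_m[of b] by (auto simp: D_iff)

lemma ipos_big: assumes "r' \<le> b" "b < nn" shows "0 < snd (ipos b)"
proof (rule ccontr)
  assume "\<not> 0 < snd (ipos b)"
  then have "snd (ipos b) = 0" by simp
  then have "pos (ipos b) = fst (ipos b)" by (metis pos_0 prod.collapse)
  moreover have "fst (ipos b) < r'" using ipos_D[of b] assms by (cases "ipos b") (auto simp: D_iff)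
  ultimately show False using pos_ipos[of b] assms by simp
qed

lemma sum_D: "(\<Sum>x\<in>D. f x) = (\<Sum>i<r'. \<Sum>j<ms ! i. f (i,j))"
  unfolding D_def by (simp add: sum.Sigma)

lemma sum_reindex: "(\<Sum>p<nn. g p) = (\<Sum>x\<in>D. g (pos x))"
  using sum.reindex_bij_betw[OF pos_bij, of g] by simp

lemma jc_bounds: assumes "(i,j) \<in> D" shows "s i \<le> jc (i,j)" "jc (i,j) < s (Suc i)"
  using assms pos_m[of i] by (auto simp: jc_def D_iff s_Suc)

lemma jc_inj: "inj_on jc D"
proof (rule inj_onI)
  fix x y assume x: "x \<in> D" and y: "y \<in> D" and e: "jc x = jc y"
  obtain i j where xe: "x = (i,j)" by force
  obtain i' j' where ye: "y = (i',j')" by force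
  have "i = i'"
  proof (rule ccontr)
    assume "i \<noteq> i'"
    then consider "Suc i \<le> i'" | "Suc i' \<le> i" by linarith
    then show False
    proof cases
      case 1 then show False using jc_bounds[of i j] jc_bounds[of i' j'] x y xe ye e s_mono[OF 1] by auto
    next
      case 2 then show False using jc_bounds[of i j] jc_bounds[of i' j'] x y xe ye e s_mono[OF 2] by auto
    qed
  qed
  then show "x = y" using e xe ye x y by (auto simp: jc_def D_iff)
qed

lemma jc_lt: "x \<in> D \<Longrightarrow> jc x < nn"
proof -
  assume x: "x \<in> D"
  obtain i j where xe: "x = (i,j)" by force
  have "Suc i \<le> r'" using x xe by (auto simp: D_iff)
  then show ?thesis using jc_bounds(2)[of i j] x xe s_mono[of "Suc i" r'] unfolding nn_def by auto
qed

lemma jc_image: "jc ` D = {..<nn}"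
proof -
  have sub: "jc ` D \<subseteq> {..<nn}" using jc_lt by auto
  have "card (jc ` D) = nn" using card_image[OF jc_inj] card_D by simp
  then show ?thesis using card_subset_eq[OF _ sub] by simp
qed

lemma jc_bij: "bij_betw jc D {..<nn}"
  using jc_inj jc_image unfolding bij_betw_def by simp

end



lemma det_permute_cols: assumes A: "A \<in> carrier_mat n n"
  and p: "p permutes {0 ..< (n :: nat)}"
  shows "det (mat n n (\<lambda> (i,j). A $$ (i, p j))) = signof p * det A"
proof -
  have "mat n n (\<lambda> (i,j). A $$ (i, p j)) = transpose_mat (mat n n (\<lambda> (i,j). transpose_mat A $$ (p i, j)))"
    using A p by (intro eq_matI) (auto simp: permutes_in_image)
  moreover have "mat n n (\<lambda> (i,j). transpose_mat A $$ (p i, j)) \<in> carrier_mat n n" by simp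
  ultimately have "det (mat n n (\<lambda> (i,j). A $$ (i, p j))) = det (mat n n (\<lambda> (i,j). transpose_mat A $$ (p i, j)))"
    using det_transpose by metis
  also have "\<dots> = signof p * det (transpose_mat A)" by (rule det_permute_rows[OF _ p]) (use A in auto)
  also have "\<dots> = signof p * det A" using A by (simp add: det_transpose)
  finally show ?thesis .
qed

context blk
begin

definition tau :: "nat \<Rightarrow> nat" where
  "tau b = (if b < nn then (if b < r' then pos (b, ms ! b - 1) else pos (fst (ipos b), snd (ipos b) - 1)) else b)"

definition Bmat :: "(nat \<Rightarrow> 'a :: comm_ring_1 vec) \<Rightarrow> 'a mat" where
  "Bmat d = mat nn nn (\<lambda>(a,b). if snd (ipos b) + 1 < ms ! fst (ipos b)
      then (if a = pos (fst (ipos b), snd (ipos b) + 1) then 1 else 0) else d (fst (ipos b)) $ a)"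

definition Xmat :: "(nat \<Rightarrow> 'a :: comm_ring_1 vec) \<Rightarrow> 'a poly mat" where
  "Xmat d = mat r' r' (\<lambda>(i,k). (if i = k then monom 1 (ms ! i) else 0) - (\<Sum>j<ms ! i. monom (d k $ pos (i,j)) j))"

definition Vmat :: "'a :: comm_ring_1 poly mat" where
  "Vmat = mat nn nn (\<lambda>(a,b). if a < r' then (if fst (ipos b) = a then monom 1 (snd (ipos b)) else 0)
      else (if a = b then 1 else 0))"

lemma tau_big: assumes "r' \<le> b" "b < nn" shows "tau b < b" "tau b = pos (fst (ipos b), snd (ipos b) - 1)"
proof -
  obtain i j where ij: "ipos b = (i,j)" by force
  have D: "(i,j) \<in> D" using ipos_D[of b] assms ij by simp
  have j: "0 < j" using ipos_big[OF assms] ij by simp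
  have b: "pos (i,j) = b" using pos_ipos[of b] assms ij by simp
  show "tau b = pos (fst (ipos b), snd (ipos b) - 1)" using assms unfolding tau_def by simp
  show "tau b < b"
  proof (cases "j = 1")
    case True
    then have "tau b = i" using assms ij unfolding tau_def by simp
    then show ?thesis using D assms by (auto simp: D_iff)
  next
    case False
    then have "tau b = pos (i, j - 1)" using assms ij unfolding tau_def by simp
    then show ?thesis using b j False by (simp add: pos_pos)
  qed
qed

lemma tau_D: "b < nn \<Longrightarrow> tau b = pos (if b < r' then (b, ms ! b - 1) else (fst (ipos b), snd (ipos b) - 1))
   \<and> (if b < r' then (b, ms ! b - 1) else (fst (ipos b), snd (ipos b) - 1)) \<in> D"
  using ipos_D[of b] pos_m[of b] by (cases "ipos b") (auto simp: tau_def D_iff)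

lemma tau_inj: "inj_on tau {..<nn}"
proof (rule inj_onI)
  fix b c assume b: "b \<in> {..<nn}" and c: "c \<in> {..<nn}" and e: "tau b = tau c"
  define xb where "xb = (if b < r' then (b, ms ! b - 1) else (fst (ipos b), snd (ipos b) - 1))"
  define xc where "xc = (if c < r' then (c, ms ! c - 1) else (fst (ipos c), snd (ipos c) - 1))"
  have xbD: "xb \<in> D" "tau b = pos xb" using tau_D[of b] b unfolding xb_def by auto
  have xcD: "xc \<in> D" "tau c = pos xc" using tau_D[of c] c unfolding xc_def by auto
  have exy: "xb = xc" using inj_onD[OF pos_inj _ xbD(1) xcD(1)] xbD(2) xcD(2) e by simp
  have big: "snd (ipos y) - 1 < ms ! fst (ipos y) - 1 \<and> 0 < snd (ipos y)" if "r' \<le> y" "y < nn" for y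
  proof -
    obtain i j where ij: "ipos y = (i,j)" by force
    have "(i,j) \<in> D" using ipos_D[of y] that ij by simp
    moreover have "0 < j" using ipos_big[OF that] ij by simp
    ultimately show ?thesis using ij by (simp add: D_iff, arith)
  qed
  show "b = c"
  proof (cases "b < r'")
    case bT: True
    show ?thesis
    proof (cases "c < r'")
      case True then show ?thesis using exy bT unfolding xb_def xc_def by simp
    next
      case False
      then have "xc = (fst (ipos c), snd (ipos c) - 1)" unfolding xc_def by simp
      moreover have "xb = (b, ms ! b - 1)" using bT unfolding xb_def by simp
      ultimately have "(b, ms ! b - 1) = (fst (ipos c), snd (ipos c) - 1)" using exy by auto
      then have "b = fst (ipos c)" "ms ! b - 1 = snd (ipos c) - 1" by auto
      then show ?thesis using big[of c] False c by simp
    qed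
  next
    case bF: False
    show ?thesis
    proof (cases "c < r'")
      case True
      then have "xc = (c, ms ! c - 1)" unfolding xc_def by simp
      moreover have "xb = (fst (ipos b), snd (ipos b) - 1)" using bF unfolding xb_def by simp
      ultimately have "(fst (ipos b), snd (ipos b) - 1) = (c, ms ! c - 1)" using exy by auto
      then have "c = fst (ipos b)" "ms ! c - 1 = snd (ipos b) - 1" by auto
      then show ?thesis using big[of b] bF b by simp
    next
      case False
      then have "xc = (fst (ipos c), snd (ipos c) - 1)" unfolding xc_def by simp
      moreover have "xb = (fst (ipos b), snd (ipos b) - 1)" using bF unfolding xb_def by simp
      ultimately have "(fst (ipos b), snd (ipos b) - 1) = (fst (ipos c), snd (ipos c) - 1)" using exy by auto
      then have "fst (ipos b) = fst (ipos c)" "snd (ipos b) - 1 = snd (ipos c) - 1" by auto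
      moreover have "0 < snd (ipos b)" "0 < snd (ipos c)" using big[of b] big[of c] bF False b c by auto
      ultimately have "ipos b = ipos c" by (simp add: prod_eq_iff)
      then show ?thesis using pos_ipos b c by (metis lessThan_iff)
    qed
  qed
qed

lemma tau_permutes: "tau permutes {0..<nn}"
proof -
  have sub: "tau ` {..<nn} \<subseteq> {..<nn}"
  proof
    fix y assume "y \<in> tau ` {..<nn}"
    then obtain b where b: "b < nn" "y = tau b" by auto
    from tau_D[OF b(1)] obtain x where "x \<in> D" "tau b = pos x" by blast
    then show "y \<in> {..<nn}" using b pos_lt by (cases x) auto
  qed
  have "tau ` {..<nn} = {..<nn}" using endo_inj_surj[OF _ sub tau_inj] by simp
  then have "bij_betw tau {..<nn} {..<nn}" using tau_inj unfolding bij_betw_def by simp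
  then show ?thesis by (intro bij_imp_permutes) (auto simp: tau_def atLeast0LessThan)
qed

lemma Vmat_carrier: "Vmat \<in> carrier_mat nn nn" unfolding Vmat_def by simp

lemma det_Vmat: "det (Vmat :: 'a :: comm_ring_1 poly mat) = 1"
proof -
  have ut: "upper_triangular (Vmat :: 'a poly mat)"
    unfolding upper_triangular_def Vmat_def using ipos_small by auto
  have "det (Vmat :: 'a poly mat) = prod_list (diag_mat Vmat)" by (rule det_upper_triangular[OF ut Vmat_carrier])
  also have "\<dots> = (\<Prod>i = 0..<nn. (Vmat :: 'a poly mat) $$ (i, i))" by (simp add: prod_list_diag_prod Vmat_def)
  also have "\<dots> = (\<Prod>i = 0..<nn. 1)" by (rule prod.cong) (auto simp: Vmat_def ipos_small)
  finally show ?thesis by simp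
qed

lemma VC_small: assumes C: "C \<in> carrier_mat nn nn" and a: "a < r'" and b: "b < nn"
  shows "(Vmat * C) $$ (a,b) = (\<Sum>j<ms ! a. monom 1 j * C $$ (pos (a,j), b))"
proof -
  have a': "a < nn" using a nn_ge by simp
  have "(Vmat * C) $$ (a,b) = (\<Sum>c<nn. Vmat $$ (a,c) * C $$ (c,b))"
    using C a' b by (simp add: Vmat_def scalar_prod_def atLeast0LessThan)
  also have "\<dots> = (\<Sum>x\<in>D. Vmat $$ (a,pos x) * C $$ (pos x,b))" by (rule sum_reindex)
  also have "\<dots> = (\<Sum>i<r'. \<Sum>j<ms ! i. Vmat $$ (a,pos (i,j)) * C $$ (pos (i,j),b))" by (rule sum_D)
  also have "\<dots> = (\<Sum>i<r'. if i = a then (\<Sum>j<ms ! i. monom 1 j * C $$ (pos (i,j),b)) else 0)"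
  proof (intro sum.cong refl)
    fix i assume i: "i \<in> {..<r'}"
    show "(\<Sum>j<ms ! i. Vmat $$ (a,pos (i,j)) * C $$ (pos (i,j),b)) =
          (if i = a then (\<Sum>j<ms ! i. monom 1 j * C $$ (pos (i,j),b)) else 0)"
      using i a a' pos_lt ipos_pos by (auto simp: Vmat_def D_iff intro!: sum.cong)
  qed
  also have "\<dots> = (\<Sum>j<ms ! a. monom 1 j * C $$ (pos (a,j), b))" using a by simp
  finally show ?thesis .
qed

lemma VC_big: assumes C: "C \<in> carrier_mat nn nn" and a: "r' \<le> a" "a < nn" and b: "b < nn"
  shows "(Vmat * C) $$ (a,b) = C $$ (a,b)"
proof -
  have "(Vmat * C) $$ (a,b) = (\<Sum>i = 0..<nn. (if a = i then 1 else 0) * C $$ (i, b))"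
    using C a b by (simp add: Vmat_def scalar_prod_def)
  also have "\<dots> = (\<Sum>i\<in>{0..<nn}. (if i = a then C $$ (i,b) else 0))" by (rule sum.cong) auto
  also have "\<dots> = C $$ (a,b)" using a by simp
  finally show ?thesis .
qed

lemma cpm_index: assumes B: "B \<in> carrier_mat nn nn" and a: "a < nn" and b: "b < nn"
  shows "char_poly_matrix B $$ (a,b) = (if a = b then [:0,1:] else 0) - [: B $$ (a,b) :]"
  using B a b by (simp add: char_poly_matrix_def)

lemma Bmat_carrier: "Bmat d \<in> carrier_mat nn nn" unfolding Bmat_def by simp

lemma Bmat_end: assumes "i < r'" "a < nn" shows "Bmat d $$ (a, pos (i, ms ! i - 1)) = d i $ a"
proof -
  have D: "(i, ms ! i - 1) \<in> D" using assms pos_m[of i] by (auto simp: D_iff)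
  show ?thesis using assms ipos_pos[OF D] pos_lt[OF D] pos_m[of i] by (simp add: Bmat_def)
qed

lemma Bmat_mid: assumes "(i,j) \<in> D" "Suc j < ms ! i" "a < nn"
  shows "Bmat d $$ (a, pos (i, j)) = (if a = pos (i, Suc j) then 1 else 0)"
  using assms ipos_pos[OF assms(1)] pos_lt[OF assms(1)] by (simp add: Bmat_def)

lemma monom_X: "monom (1::'a::comm_ring_1) j * [:0,1:] = monom 1 (Suc j)"
proof -
  have "[:0,1:] = monom (1::'a) 1" by (simp add: monom_Suc monom_0)
  then show ?thesis by (simp add: mult_monom)
qed

lemma monom_const: "monom (1::'a::comm_ring_1) j * [:c:] = monom c j"
proof -
  have "[:c:] = monom c 0" by (simp add: monom_0)
  then show ?thesis by (simp add: mult_monom)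
qed

end


context blk begin

lemma Bmat_tau: assumes b: "r' \<le> b" "b < nn" and x: "x < nn"
  shows "Bmat d $$ (x, tau b) = (if x = b then 1 else 0)"
proof -
  obtain i j where ij: "ipos b = (i,j)" by force
  have D: "(i,j) \<in> D" using ipos_D[of b] b ij by simp
  have j: "0 < j" using ipos_big[OF b] ij by simp
  have bpos: "pos (i,j) = b" using pos_ipos[of b] b ij by simp
  have tb: "tau b = pos (i, j - 1)" using tau_big(2)[OF b] ij by simp
  have D1: "(i, j - 1) \<in> D" using D by (auto simp: D_iff)
  show ?thesis using Bmat_mid[OF D1 _ x] D j bpos tb by (auto simp: D_iff)
qed

lemma det_main_general: fixes d :: "nat \<Rightarrow> 'a :: idom vec" shows "signof tau * det (char_poly_matrix (Bmat d)) = det (Xmat d) * (-1) ^ (nn - r')"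
proof -
  define C where "C = char_poly_matrix (Bmat d)"
  have C: "C \<in> carrier_mat nn nn" unfolding C_def using char_poly_matrix_closed[OF Bmat_carrier] .
  have VC: "Vmat * C \<in> carrier_mat nn nn" using mult_carrier_mat[OF Vmat_carrier C] .
  define M where "M = mat nn nn (\<lambda>(a,b). (Vmat * C) $$ (a, tau b))"
  have detM: "det M = signof tau * det C"
    unfolding M_def det_permute_cols[OF VC tau_permutes] det_mult[OF Vmat_carrier C] det_Vmat by simp
  have Cidx: "C $$ (a,b) = (if a = b then [:0,1:] else 0) - [: Bmat d $$ (a,b) :]" if "a < nn" "b < nn" for a b
    unfolding C_def by (rule cpm_index[OF Bmat_carrier that])
  define UL where "UL = mat r' r' (\<lambda>(a,b). M $$ (a,b))"
  define LL where "LL = mat (nn - r') r' (\<lambda>(a,b). M $$ (a + r',b))"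
  define LR where "LR = mat (nn - r') (nn - r') (\<lambda>(a,b). M $$ (a + r',b + r'))"
  have UR0: "M $$ (a,b) = 0" if a: "a < r'" and b: "r' \<le> b" "b < nn" for a b
  proof -
    obtain i j where ij: "ipos b = (i,j)" by force
    have D: "(i,j) \<in> D" using ipos_D[of b] b ij by simp
    have j: "0 < j" using ipos_big[OF b] ij by simp
    have bpos: "pos (i,j) = b" using pos_ipos[of b] b ij by simp
    have tb: "tau b = pos (i, j - 1)" using tau_big(2)[OF b] ij by simp
    have D1: "(i, j - 1) \<in> D" using D by (auto simp: D_iff)
    have tblt: "tau b < nn" using tb pos_lt[OF D1] by simp
    have hj: "monom 1 (j - 1) * [:0,1:] = (monom 1 j :: 'a poly)" using monom_X[of "j - 1"] j by simp
    have Bm: "Bmat d $$ (c, tau b) = (if c = b then 1 else 0)" if "c < nn" for c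
      using Bmat_mid[OF D1 _ that] D j bpos tb by (auto simp: D_iff)
    have "M $$ (a,b) = (\<Sum>j'<ms ! a. monom 1 j' * C $$ (pos (a,j'), tau b))"
      unfolding M_def using b a nn_ge VC_small[OF C a tblt] by simp
    also have "\<dots> = (\<Sum>j'<ms ! a. (if (a,j') = (i, j - 1) then monom 1 j else 0) - (if (a,j') = (i,j) then monom 1 j else 0))"
    proof (intro sum.cong refl)
      fix j' assume j': "j' \<in> {..<ms ! a}"
      have Daj: "(a,j') \<in> D" using a j' by (auto simp: D_iff)
      have e1: "pos (a,j') = pos (i, j - 1) \<longleftrightarrow> (a,j') = (i, j - 1)" using pos_inj Daj D1 by (auto dest: inj_onD)
      have e2: "pos (a,j') = b \<longleftrightarrow> (a,j') = (i, j)" using pos_inj Daj D bpos by (auto dest: inj_onD)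
      show "monom 1 j' * C $$ (pos (a,j'), tau b) = (if (a,j') = (i, j - 1) then monom 1 j else 0) - (if (a,j') = (i,j) then monom 1 j else 0)"
        using Cidx[OF pos_lt[OF Daj] tblt] Bm[OF pos_lt[OF Daj]] e1 e2 tb j hj
        by (auto simp: right_diff_distrib)
    qed
    also have "\<dots> = 0"
    proof (cases "a = i")
      case True
      then show ?thesis using D j by (simp add: sum_subtractf D_iff, arith)
    qed (simp add: sum_subtractf)
    finally show ?thesis .
  qed
  have M4: "M = four_block_mat UL (0\<^sub>m r' (nn - r')) LL LR"
    using nn_ge UR0 by (intro eq_matI) (auto simp: UL_def LL_def LR_def M_def)
  have LRut: "upper_triangular LR"
    unfolding upper_triangular_def
  proof (intro allI impI)
    fix a b assume a: "a < dim_row LR" and ba: "b < a"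
    have bb: "r' \<le> b + r'" "b + r' < nn" using a ba by (auto simp: LR_def)
    have ab: "a + r' < nn" using a by (auto simp: LR_def)
    have "tau (b + r') < b + r'" by (rule tau_big(1)[OF bb])
    moreover have "tau (b + r') < nn" using tau_D[of "b + r'"] bb pos_lt by auto
    ultimately show "LR $$ (a,b) = 0"
      using a ba VC_big[OF C _ ab] Cidx[OF ab] bb Bmat_tau[OF bb ab, of d] unfolding LR_def M_def by simp
  qed
  have LRc: "LR \<in> carrier_mat (nn - r') (nn - r')" unfolding LR_def by simp
  have detLR: "det LR = (-1) ^ (nn - r')"
  proof -
    have "det LR = prod_list (diag_mat LR)" by (rule det_upper_triangular[OF LRut LRc])
    also have "\<dots> = (\<Prod>i = 0..<nn - r'. LR $$ (i,i))"
      unfolding prod_list_diag_prod using LRc by simp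
    also have "\<dots> = (\<Prod>i = 0..<nn - r'. -1)"
    proof (rule prod.cong, simp)
      fix a assume a: "a \<in> {0..<nn - r'}"
      have bb: "r' \<le> a + r'" "a + r' < nn" using a by auto
      have "tau (a + r') < a + r'" by (rule tau_big(1)[OF bb])
      moreover have "tau (a + r') < nn" using tau_D[of "a + r'"] bb pos_lt by auto
      ultimately show "LR $$ (a,a) = -1"
        using a VC_big[OF C bb] Cidx[OF bb(2)] bb Bmat_tau[OF bb bb(2), of d] unfolding LR_def M_def
        by (simp add: one_pCons)
    qed
    finally show ?thesis by simp
  qed
  have ULX: "UL = Xmat d"
  proof (rule eq_matI)
    fix a b assume "a < dim_row (Xmat d)" "b < dim_col (Xmat d)"
    then have a: "a < r'" and b: "b < r'" by (auto simp: Xmat_def)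
    have Db: "(b, ms ! b - 1) \<in> D" using b pos_m[of b] by (auto simp: D_iff)
    have tb: "tau b = pos (b, ms ! b - 1)" using b nn_ge unfolding tau_def by auto
    have tblt: "tau b < nn" using tb pos_lt[OF Db] by simp
    have "UL $$ (a,b) = (\<Sum>j<ms ! a. monom 1 j * C $$ (pos (a,j), tau b))"
      unfolding UL_def M_def using a b nn_ge VC_small[OF C a tblt] by simp
    also have "\<dots> = (\<Sum>j<ms ! a. (if (a,j) = (b, ms ! b - 1) then monom 1 (ms ! a) else 0) - monom (d b $ pos (a,j)) j)"
    proof (intro sum.cong refl)
      fix j assume j: "j \<in> {..<ms ! a}"
      have Daj: "(a,j) \<in> D" using a j by (auto simp: D_iff)
      have e1: "pos (a,j) = pos (b, ms ! b - 1) \<longleftrightarrow> (a,j) = (b, ms ! b - 1)" using pos_inj Daj Db by (auto dest: inj_onD)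
      have Bv: "Bmat d $$ (pos (a,j), tau b) = d b $ pos (a,j)" using Bmat_end[OF b pos_lt[OF Daj]] tb by simp
      show "monom 1 j * C $$ (pos (a,j), tau b) = (if (a,j) = (b, ms ! b - 1) then monom 1 (ms ! a) else 0) - monom (d b $ pos (a,j)) j"
      proof (cases "(a,j) = (b, ms ! b - 1)")
        case True
        then have "C $$ (pos (a,j), tau b) = [:0,1:] - [: d b $ pos (a,j) :]"
          using Cidx[OF pos_lt[OF Daj] tblt] Bv e1 tb by simp
        moreover have "monom 1 j * [:0,1:] = (monom 1 (ms ! a) :: 'a poly)"
          using monom_X[of j] True pos_m[of a] a by simp
        ultimately show ?thesis using True
          by (simp only: right_diff_distrib monom_const if_True refl)
      next
        case False
        then have "C $$ (pos (a,j), tau b) = 0 - [: d b $ pos (a,j) :]"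
          using Cidx[OF pos_lt[OF Daj] tblt] Bv e1 tb by simp
        then show ?thesis using False
          by (simp only: right_diff_distrib monom_const if_False mult_zero_right)
      qed
    qed
    also have "\<dots> = (if a = b then monom 1 (ms ! a) else 0) - (\<Sum>j<ms ! a. monom (d b $ pos (a,j)) j)"
      using pos_m[of a] a by (auto simp: sum_subtractf)
    also have "\<dots> = Xmat d $$ (a,b)" using a b by (simp add: Xmat_def)
    finally show "UL $$ (a,b) = Xmat d $$ (a,b)" .
  qed (auto simp: UL_def Xmat_def)
  have "det M = det UL * det LR"
    unfolding M4 by (rule det_four_block_mat_upper_right_zero) (auto simp: UL_def LL_def LR_def)
  then show ?thesis using detM detLR ULX unfolding C_def by simp
qed

end


context blk begin

lemma pos_Suc_gt: assumes "(i, Suc j) \<in> D" shows "pos (i,j) < pos (i, Suc j)"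
proof (cases j)
  case 0 then show ?thesis using assms pos_ge[of "Suc 0" i] by (auto simp: D_iff)
next
  case (Suc k) then show ?thesis by (simp add: pos_pos)
qed

lemma Bmat_zero_le: assumes a: "a \<le> b" "b < nn"
  shows "Bmat (\<lambda>_. 0\<^sub>v nn) $$ (a,b) = (0 :: 'a :: comm_ring_1)"
proof -
  obtain i j where ij: "ipos b = (i,j)" by force
  have D: "(i,j) \<in> D" using ipos_D[of b] a ij by simp
  have bpos: "pos (i,j) = b" using pos_ipos[of b] a ij by simp
  have "Suc j < ms ! i \<Longrightarrow> a \<noteq> pos (i, Suc j)"
    using pos_Suc_gt[of i j] D a bpos by (auto simp: D_iff)
  then show ?thesis using a ij by (auto simp: Bmat_def)
qed

lemma det_main: fixes d :: "nat \<Rightarrow> 'a :: idom vec"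
  shows "det (char_poly_matrix (Bmat d)) = det (Xmat d)"
proof -
  define d0 where "d0 = (\<lambda>_::nat. 0\<^sub>v nn :: 'a vec)"
  define C0 where "C0 = char_poly_matrix (Bmat d0)"
  have C0: "C0 \<in> carrier_mat nn nn" unfolding C0_def using char_poly_matrix_closed[OF Bmat_carrier] .
  have C0idx: "C0 $$ (a,b) = (if a = b then [:0,1:] else 0) - [: Bmat d0 $$ (a,b) :]" if "a < nn" "b < nn" for a b
    unfolding C0_def by (rule cpm_index[OF Bmat_carrier that])
  have "det C0 = prod_list (diag_mat C0)"
  proof (rule det_lower_triangular[OF _ C0])
    fix a b assume "a < b" "b < nn"
    then show "C0 $$ (a,b) = 0" using C0idx[of a b] Bmat_zero_le[of a b] unfolding d0_def by simp
  qed
  also have "\<dots> = (\<Prod>i = 0..<nn. C0 $$ (i,i))" unfolding prod_list_diag_prod using C0 by simp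
  also have "\<dots> = (\<Prod>i = 0..<nn. [:0,1:])"
  proof (rule prod.cong, simp)
    fix i assume "i \<in> {0..<nn}"
    then show "C0 $$ (i,i) = [:0,1:]" using C0idx[of i i] Bmat_zero_le[of i i] unfolding d0_def by simp
  qed
  finally have dC0: "det C0 = [:0,1:] ^ nn" by simp
  have X0sum: "(\<Sum>j<ms ! i. monom ((0\<^sub>v nn :: 'a vec) $ pos (i,j)) j) = 0" if "i < r'" for i
    by (rule sum.neutral) (use pos_lt that in \<open>auto simp: D_iff\<close>)
  have X0: "Xmat d0 \<in> carrier_mat r' r'" unfolding Xmat_def by simp
  have "det (Xmat d0) = prod_list (diag_mat (Xmat d0))"
    by (rule det_upper_triangular[OF _ X0]) (auto simp: upper_triangular_def Xmat_def d0_def X0sum)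
  also have "\<dots> = (\<Prod>i = 0..<r'. Xmat d0 $$ (i,i))" unfolding prod_list_diag_prod using X0 by simp
  also have "\<dots> = (\<Prod>i = 0..<r'. [:0,1:] ^ (ms ! i))"
    by (rule prod.cong, simp) (simp add: Xmat_def d0_def X0sum, simp add: monom_altdef)
  also have "\<dots> = [:0,1:] ^ nn" unfolding nn_def s_def by (simp add: power_sum atLeast0LessThan)
  finally have dX0: "det (Xmat d0) = [:0,1:] ^ nn" .
  have "signof tau * [:0,1:] ^ nn = [:0,1:] ^ nn * (-1 :: 'a poly) ^ (nn - r')"
    using det_main_general[of d0] dC0 dX0 unfolding C0_def by simp
  then have sg: "signof tau = (-1 :: 'a poly) ^ (nn - r')" by (simp add: mult.commute)
  have "(-1 :: 'a poly) ^ (nn - r') * det (char_poly_matrix (Bmat d)) = (-1) ^ (nn - r') * det (Xmat d)"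
    using det_main_general[of d] sg by (simp add: mult.commute)
  then show ?thesis by simp
qed

end


lemma jordan_matrix_Cons: "jordan_matrix ((n,a) # xs) = four_block_mat (jordan_block n a)
   (0\<^sub>m n (sum_list (map fst xs))) (0\<^sub>m (sum_list (map fst xs)) n) (jordan_matrix xs)"
  using jordan_matrix_dim[of xs] unfolding jordan_matrix_def by (simp add: Let_def)

lemma jm_col:
  assumes "i < length ns" "k < ns ! i" "a < sum_list ns"
  shows "jordan_matrix (map (\<lambda>m. (m, 0::'k::field)) ns) $$ (a, sum_list (take i ns) + k) =
    (if 0 < k \<and> a = sum_list (take i ns) + k - 1 then 1 else 0)"
  using assms
proof (induct ns arbitrary: i a)
  case Nil then show ?case by simp
next
  case (Cons m ns)
  have sm: "sum_list (map fst (map (\<lambda>m. (m, 0::'k)) ns)) = sum_list ns" by (induct ns) auto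
  note JC = jordan_matrix_Cons[of m "0::'k" "map (\<lambda>m. (m, 0::'k)) ns", unfolded sm]
  have dJ: "dim_row (jordan_matrix (map (\<lambda>m. (m, 0::'k)) ns)) = sum_list ns"
      "dim_col (jordan_matrix (map (\<lambda>m. (m, 0::'k)) ns)) = sum_list ns" using sm by simp_all
  have idx: "jordan_matrix (map (\<lambda>m. (m, 0::'k)) (m#ns)) $$ (x,y) = (if x < m then if y < m then jordan_block m 0 $$ (x,y) else 0
     else if y < m then 0 else jordan_matrix (map (\<lambda>m. (m,0::'k)) ns) $$ (x - m, y - m))"
    if "x < m + sum_list ns" "y < m + sum_list ns" for x y
    using that unfolding list.map(2) JC by (subst index_mat_four_block(1)) (auto simp: dJ comp_def)
  show ?case
  proof (cases i)
    case 0
    then have k: "k < m" using Cons by simp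
    have kk: "k < m + sum_list ns" using k by simp
    show ?thesis
    proof (cases "a < m")
      case True then show ?thesis using Cons(4) k 0 idx[OF _ kk] by (simp, arith)
    next
      case False
      have "a \<noteq> k - 1" using False k by linarith
      then show ?thesis using Cons(4) k 0 idx[OF _ kk] False by simp
    qed
  next
    case (Suc i')
    have i': "i' < length ns" "k < ns ! i'" using Cons Suc by auto
    have col: "sum_list (take i (m # ns)) + k = m + (sum_list (take i' ns) + k)" using Suc by simp
    have bnd: "sum_list (take i' ns) + k < sum_list ns"
    proof -
      have e1: "sum_list ns = sum_list (take (Suc i') ns) + sum_list (drop (Suc i') ns)"
        by (metis append_take_drop_id sum_list_append)
      have e2: "sum_list (take (Suc i') ns) = sum_list (take i' ns) + ns ! i'"
        using i' by (simp add: take_Suc_conv_app_nth)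
      show ?thesis using e1 e2 i' by linarith
    qed
    show ?thesis
    proof (cases "a < m")
      case True
      then show ?thesis unfolding col using Cons(4) bnd idx by auto
    next
      case False
      have a': "a - m < sum_list ns" using Cons(4) False by simp
      have "jordan_matrix (map (\<lambda>m. (m, 0::'k)) (m # ns)) $$ (a, m + (sum_list (take i' ns) + k))
          = jordan_matrix (map (\<lambda>m. (m, 0::'k)) ns) $$ (a - m, sum_list (take i' ns) + k)"
        using False Cons(4) bnd idx by auto
      also have "\<dots> = (if 0 < k \<and> a - m = sum_list (take i' ns) + k - 1 then 1 else 0)"
        by (rule Cons(1)[OF i' a'])
      finally show ?thesis unfolding col using False by auto
    qed
  qed
qed



lemma coeff_bound: "degree p < N \<Longrightarrow> \<forall>j\<ge>N. coeff p j = 0"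
  by (auto intro: coeff_eq_0)

lemma Ev_comp: assumes A: "A \<in> carrier_mat n n" and w: "w \<in> carrier_vec n" and a: "a < n"
  and N: "degree p < N"
  shows "(mat_eval_poly A p *\<^sub>v w) $ a = (\<Sum>j<N. coeff p j * (A ^\<^sub>m j *\<^sub>v w) $ a)"
  by (rule EV_formula[OF A w a coeff_bound[OF N]])

lemma Ev_carrier: "A \<in> carrier_mat n n \<Longrightarrow> w \<in> carrier_vec n \<Longrightarrow> mat_eval_poly A p *\<^sub>v w \<in> carrier_vec n"
  using mat_eval_poly_carrier by (metis mult_mat_vec_carrier)

lemma Ev_dim: "A \<in> carrier_mat n n \<Longrightarrow> w \<in> carrier_vec n \<Longrightarrow> dim_vec (mat_eval_poly A p *\<^sub>v w) = n"
  using Ev_carrier carrier_vecD by blast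

lemma Ev_add: assumes A: "A \<in> carrier_mat n n" and w: "w \<in> carrier_vec n"
  shows "mat_eval_poly A (p + q) *\<^sub>v w = mat_eval_poly A p *\<^sub>v w + mat_eval_poly A q *\<^sub>v w"
proof (rule eq_vecI)
  fix a assume "a < dim_vec (mat_eval_poly A p *\<^sub>v w + mat_eval_poly A q *\<^sub>v w)"
  then have a: "a < n" using Ev_dim[OF A w, of q] by simp
  define N where "N = Suc (degree p + degree q)"
  have N: "degree p < N" "degree q < N" "degree (p + q) < N"
    using degree_add_le_max[of p q] unfolding N_def by auto
  show "(mat_eval_poly A (p + q) *\<^sub>v w) $ a = (mat_eval_poly A p *\<^sub>v w + mat_eval_poly A q *\<^sub>v w) $ a"
    using Ev_dim[OF A w, of p] Ev_dim[OF A w, of q] a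
    by (simp add: Ev_comp[OF A w a N(1)] Ev_comp[OF A w a N(2)] Ev_comp[OF A w a N(3)]
        sum.distrib distrib_right)
qed (use Ev_dim[OF A w] in simp)

lemma Ev_diff: assumes A: "A \<in> carrier_mat n n" and w: "w \<in> carrier_vec n" and a: "a < n"
  shows "(mat_eval_poly A (p - q) *\<^sub>v w) $ a = (mat_eval_poly A p *\<^sub>v w) $ a - (mat_eval_poly A q *\<^sub>v w) $ a"
proof -
  define N where "N = Suc (degree p + degree q)"
  have N: "degree p < N" "degree q < N" "degree (p - q) < N"
    using degree_diff_le_max[of p q] unfolding N_def by auto
  show ?thesis
    by (simp add: Ev_comp[OF A w a N(1)] Ev_comp[OF A w a N(2)] Ev_comp[OF A w a N(3)]
        sum_subtractf left_diff_distrib)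
qed

lemma Ev_smult: assumes A: "A \<in> carrier_mat n n" and w: "w \<in> carrier_vec n"
  shows "mat_eval_poly A (Polynomial.smult c p) *\<^sub>v w = c \<cdot>\<^sub>v (mat_eval_poly A p *\<^sub>v w)"
proof (rule eq_vecI)
  fix a assume "a < dim_vec (c \<cdot>\<^sub>v (mat_eval_poly A p *\<^sub>v w))"
  then have a: "a < n" using Ev_dim[OF A w, of p] by simp
  define N where "N = Suc (degree p)"
  have N: "degree p < N" "degree (Polynomial.smult c p) < N" using degree_smult_le[of c p] unfolding N_def by auto
  show "(mat_eval_poly A (Polynomial.smult c p) *\<^sub>v w) $ a = (c \<cdot>\<^sub>v (mat_eval_poly A p *\<^sub>v w)) $ a"
    using Ev_dim[OF A w, of p] a
    by (simp add: Ev_comp[OF A w a N(1)] Ev_comp[OF A w a N(2)] sum_distrib_left mult.assoc)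
qed (use Ev_dim[OF A w] in simp)

lemma Ev_pCons: assumes A: "A \<in> carrier_mat n n" and w: "w \<in> carrier_vec n"
  shows "mat_eval_poly A (pCons c p) *\<^sub>v w = c \<cdot>\<^sub>v w + A *\<^sub>v (mat_eval_poly A p *\<^sub>v w)"
proof -
  have E: "mat_eval_poly A p \<in> carrier_mat n n" by (rule mat_eval_poly_carrier[OF A])
  show ?thesis unfolding mat_eval_poly_pCons[OF A] using A w E
    by (simp add: add_mult_distrib_mat_vec[of _ n n] assoc_mult_mat_vec[of _ n n _ n] smult_one_mat_vec)
qed

lemma zero_mat_vec: assumes "v \<in> carrier_vec n" shows "0\<^sub>m m n *\<^sub>v v = 0\<^sub>v m"
proof (rule eq_vecI)
  show "\<And>i. i < dim_vec (0\<^sub>v m) \<Longrightarrow> (0\<^sub>m m n *\<^sub>v v) $ i = 0\<^sub>v m $ i"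
    "dim_vec (0\<^sub>m m n *\<^sub>v v) = dim_vec (0\<^sub>v m)" using assms by (auto simp: scalar_prod_def)
qed

lemma mat_vec_zero: assumes "M \<in> carrier_mat m n" shows "M *\<^sub>v 0\<^sub>v n = 0\<^sub>v m"
proof (rule eq_vecI)
  show "\<And>i. i < dim_vec (0\<^sub>v m) \<Longrightarrow> (M *\<^sub>v 0\<^sub>v n) $ i = 0\<^sub>v m $ i"
    "dim_vec (M *\<^sub>v 0\<^sub>v n) = dim_vec (0\<^sub>v m)" using assms by (auto simp: scalar_prod_def)
qed

lemma Ev_zero_vec: assumes A: "A \<in> carrier_mat n n"
  shows "mat_eval_poly A p *\<^sub>v 0\<^sub>v n = 0\<^sub>v n"
  by (rule mat_vec_zero[OF mat_eval_poly_carrier[OF A]])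

lemma Ev_mult: assumes A: "A \<in> carrier_mat n n" and w: "w \<in> carrier_vec n"
  shows "mat_eval_poly A (p * q) *\<^sub>v w = mat_eval_poly A p *\<^sub>v (mat_eval_poly A q *\<^sub>v w)"
proof (induct p)
  case 0
  then show ?case using A w Ev_carrier[OF A w, of q] by (simp add: mat_eval_poly_0 zero_mat_vec)
next
  case (pCons c p)
  have Eq: "mat_eval_poly A q *\<^sub>v w \<in> carrier_vec n" by (rule Ev_carrier[OF A w])
  have Epq: "mat_eval_poly A (p * q) *\<^sub>v w \<in> carrier_vec n" by (rule Ev_carrier[OF A w])
  have "mat_eval_poly A (pCons c p * q) *\<^sub>v w = mat_eval_poly A (Polynomial.smult c q + pCons 0 (p * q)) *\<^sub>v w"
    by simp
  also have "\<dots> = c \<cdot>\<^sub>v (mat_eval_poly A q *\<^sub>v w) + A *\<^sub>v (mat_eval_poly A (p * q) *\<^sub>v w)"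
  proof -
    have AE: "A *\<^sub>v (mat_eval_poly A (p * q) *\<^sub>v w) \<in> carrier_vec n" using A Epq by simp
    have "0 \<cdot>\<^sub>v w + A *\<^sub>v (mat_eval_poly A (p * q) *\<^sub>v w) = A *\<^sub>v (mat_eval_poly A (p * q) *\<^sub>v w)"
    proof (rule eq_vecI)
      have dA: "dim_row A = n" "dim_vec w = n" using assms by auto
      show "dim_vec (0 \<cdot>\<^sub>v w + A *\<^sub>v (mat_eval_poly A (p * q) *\<^sub>v w)) = dim_vec (A *\<^sub>v (mat_eval_poly A (p * q) *\<^sub>v w))"
        using dA by simp
      fix i assume "i < dim_vec (A *\<^sub>v (mat_eval_poly A (p * q) *\<^sub>v w))"
      then show "(0 \<cdot>\<^sub>v w + A *\<^sub>v (mat_eval_poly A (p * q) *\<^sub>v w)) $ i = (A *\<^sub>v (mat_eval_poly A (p * q) *\<^sub>v w)) $ i"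
        using dA by simp
    qed
    then show ?thesis unfolding Ev_add[OF A w] Ev_smult[OF A w] Ev_pCons[OF A w] by simp
  qed
  also have "\<dots> = mat_eval_poly A (pCons c p) *\<^sub>v (mat_eval_poly A q *\<^sub>v w)"
    unfolding Ev_pCons[OF A Eq] pCons(2) ..
  finally show ?case .
qed

lemma Ev_sum: assumes A: "A \<in> carrier_mat n n" and w: "w \<in> carrier_vec n" and a: "a < n" and K: "finite K"
  shows "(mat_eval_poly A (\<Sum>k\<in>K. f k) *\<^sub>v w) $ a = (\<Sum>k\<in>K. (mat_eval_poly A (f k) *\<^sub>v w) $ a)"
  using K
proof (induct K rule: finite_induct)
  case empty then show ?case using A w a by (simp add: mat_eval_poly_0)
next
  case (insert x F)
  have d1: "dim_vec (mat_eval_poly A (sum f F) *\<^sub>v w) = n" by (rule Ev_dim[OF A w])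
  then show ?case using insert Ev_add[OF A w, of "f x" "sum f F"] a by simp
qed

lemma Ev_lin: assumes A: "A \<in> carrier_mat n n" and a: "a < n" and K: "finite K"
  and y: "\<And>k. k \<in> K \<Longrightarrow> y k \<in> carrier_vec n" and z: "z \<in> carrier_vec n"
  and zy: "\<And>b. b < n \<Longrightarrow> z $ b = (\<Sum>k\<in>K. y k $ b)"
  shows "(mat_eval_poly A p *\<^sub>v z) $ a = (\<Sum>k\<in>K. (mat_eval_poly A p *\<^sub>v y k) $ a)"
proof -
  have E: "mat_eval_poly A p \<in> carrier_mat n n" by (rule mat_eval_poly_carrier[OF A])
  have "(mat_eval_poly A p *\<^sub>v z) $ a = (\<Sum>b<n. mat_eval_poly A p $$ (a,b) * (\<Sum>k\<in>K. y k $ b))"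
    using mat_vec_index_sum[OF E z a] zy by simp
  also have "\<dots> = (\<Sum>k\<in>K. \<Sum>b<n. mat_eval_poly A p $$ (a,b) * y k $ b)"
    by (simp add: sum_distrib_left sum.swap[of _ K])
  also have "\<dots> = (\<Sum>k\<in>K. (mat_eval_poly A p *\<^sub>v y k) $ a)"
    using mat_vec_index_sum[OF E _ a] y by simp
  finally show ?thesis .
qed

lemma pres_map_comp: assumes A: "A \<in> carrier_mat n n" and vs: "set vs \<subseteq> carrier_vec n" and a: "a < n"
  shows "pres_map A vs q $ a = (\<Sum>i<length vs. (mat_eval_poly A (q $ i) *\<^sub>v vs ! i) $ a)"
proof -
  have "set (map (\<lambda>i. mat_eval_poly A (q $ i) *\<^sub>v vs ! i) [0..<length vs]) \<subseteq> carrier_vec n"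
    using mat_eval_poly_carrier[OF A] vs by (auto intro!: mult_mat_vec_carrier)
  from foldr_vec_sum[OF this] a show ?thesis
    unfolding pres_map_def using A by (simp add: sum_list_sum_nth atLeast0LessThan)
qed



locale mctx = blk ms r' for ms r' +
  fixes A :: "'a :: idom mat" and r :: nat and vs :: "'a vec list" and W W' :: "'a mat"
  assumes A: "A \<in> carrier_mat nn nn"
  and len: "length ms = r"
  and vs_len: "length vs = r" and vs_car: "set vs \<subseteq> carrier_vec nn"
  and vs0: "\<And>i. r' \<le> i \<Longrightarrow> i < r \<Longrightarrow> vs ! i = 0\<^sub>v nn"
  and ms0: "\<And>i. r' \<le> i \<Longrightarrow> i < r \<Longrightarrow> ms ! i = 0"
  and W_def: "W = mat nn nn (\<lambda>(a,p). (A ^\<^sub>m (snd (ipos p)) *\<^sub>v (vs ! fst (ipos p))) $ a)"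
  and W': "W' \<in> carrier_mat nn nn" and WW': "W * W' = 1\<^sub>m nn" and W'W: "W' * W = 1\<^sub>m nn"
begin

definition bv where "bv i j = A ^\<^sub>m j *\<^sub>v (vs ! i)"
definition dd where "dd k = W' *\<^sub>v bv k (ms ! k)"
definition Xf :: "'a poly mat" where
  "Xf = mat r r (\<lambda>(i,k). if i < r' \<and> k < r' then Xmat dd $$ (i,k) else (if i = k then 1 else 0))"
definition cv :: "'a poly vec \<Rightarrow> 'a vec" where
  "cv q = vec nn (\<lambda>p. coeff (q $ fst (ipos p)) (snd (ipos p)))"

lemma r'_r: "r' \<le> r" using r'_le len by simp

lemma vs_i: "i < r \<Longrightarrow> vs ! i \<in> carrier_vec nn"
  using vs_car vs_len nth_mem by blast

lemma dimA: "dim_row A = nn" "dim_col A = nn" using A by auto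

lemma bv_car: "i < r \<Longrightarrow> bv i j \<in> carrier_vec nn"
  unfolding bv_def using vs_i A by (meson mult_mat_vec_carrier pow_carrier_mat)

lemma bv_zero: "r' \<le> i \<Longrightarrow> i < r \<Longrightarrow> bv i j = 0\<^sub>v nn"
  unfolding bv_def using vs0 A by (simp add: mat_vec_zero)

lemma W_car: "W \<in> carrier_mat nn nn" unfolding W_def by simp

lemma ipos_r: "p < nn \<Longrightarrow> fst (ipos p) < r' \<and> snd (ipos p) < ms ! fst (ipos p)"
  using ipos_D[of p] by (cases "ipos p") (auto simp: D_iff)

lemma W_col: "p < nn \<Longrightarrow> col W p = bv (fst (ipos p)) (snd (ipos p))"
proof -
  assume p: "p < nn"
  have b: "bv (fst (ipos p)) (snd (ipos p)) \<in> carrier_vec nn" using bv_car ipos_r[OF p] r'_r by simp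
  show ?thesis
  proof (rule eq_vecI)
    show "dim_vec (col W p) = dim_vec (bv (fst (ipos p)) (snd (ipos p)))" using b W_car by simp
    fix a assume "a < dim_vec (bv (fst (ipos p)) (snd (ipos p)))"
    then have a: "a < nn" using b by simp
    show "col W p $ a = bv (fst (ipos p)) (snd (ipos p)) $ a"
      using a p W_car unfolding W_def bv_def by simp
  qed
qed

lemma W_idx: "a < nn \<Longrightarrow> p < nn \<Longrightarrow> W $$ (a,p) = bv (fst (ipos p)) (snd (ipos p)) $ a"
  unfolding W_def bv_def by simp

lemma W_mult: assumes c: "c \<in> carrier_vec nn" and a: "a < nn"
  shows "(W *\<^sub>v c) $ a = (\<Sum>p<nn. bv (fst (ipos p)) (snd (ipos p)) $ a * c $ p)"
  using mat_vec_index_sum[OF W_car c a] W_idx a by simp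

lemma m_le: "i < r \<Longrightarrow> ms ! i \<le> nn"
proof (cases "i < r'")
  case True
  then show ?thesis unfolding nn_def s_def using member_le_sum[of i "{..<r'}" "\<lambda>k. ms ! k"] by simp
qed (simp add: ms0)

lemma sum_to_pos: fixes h :: "nat \<Rightarrow> nat \<Rightarrow> 'b :: comm_monoid_add"
  assumes N: "\<And>i. i < r \<Longrightarrow> ms ! i \<le> N"
  and h0: "\<And>i j. i < r \<Longrightarrow> j < N \<Longrightarrow> \<not> (i < r' \<and> j < ms ! i) \<Longrightarrow> h i j = 0"
  shows "(\<Sum>i<r. \<Sum>j<N. h i j) = (\<Sum>p<nn. h (fst (ipos p)) (snd (ipos p)))"
proof -
  have "(\<Sum>i<r. \<Sum>j<N. h i j) = (\<Sum>i<r'. \<Sum>j<N. h i j)"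
    by (rule sum.mono_neutral_right) (use r'_r h0 in auto)
  also have "\<dots> = (\<Sum>i<r'. \<Sum>j<ms ! i. h i j)"
  proof (rule sum.cong, simp)
    fix i assume i: "i \<in> {..<r'}"
    show "(\<Sum>j<N. h i j) = (\<Sum>j<ms ! i. h i j)"
    proof (rule sum.mono_neutral_right)
      have "ms ! i \<le> N" using N[of i] i r'_r by simp
      then show "{..<ms ! i} \<subseteq> {..<N}" by auto
      show "\<forall>j\<in>{..<N} - {..<ms ! i}. h i j = 0" using h0 i r'_r by auto
    qed simp
  qed
  also have "\<dots> = (\<Sum>x\<in>D. h (fst x) (snd x))" by (simp add: sum_D)
  also have "\<dots> = (\<Sum>p<nn. h (fst (ipos p)) (snd (ipos p)))"
    by (simp add: sum_reindex ipos_pos)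
  finally show ?thesis .
qed

lemma pres_sum: assumes a: "a < nn" and N: "\<forall>i<r. \<forall>j\<ge>N. coeff (q $ i) j = 0"
  shows "pres_map A vs q $ a = (\<Sum>i<r. \<Sum>j<N. coeff (q $ i) j * bv i j $ a)"
  using pres_map_formula[OF A vs_car a] N vs_len unfolding bv_def by simp

lemma FW: assumes q: "\<forall>i<r. \<forall>j\<ge>ms ! i. coeff (q $ i) j = 0"
  shows "pres_map A vs q = W *\<^sub>v cv q"
proof (rule eq_vecI)
  have cv: "cv q \<in> carrier_vec nn" unfolding cv_def by simp
  show "dim_vec (pres_map A vs q) = dim_vec (W *\<^sub>v cv q)"
    using pres_map_carrier[OF A vs_car] W_car by simp
  fix a assume "a < dim_vec (W *\<^sub>v cv q)"
  then have a: "a < nn" using W_car by simp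
  have N: "\<forall>i<r. \<forall>j\<ge>nn. coeff (q $ i) j = 0" using q m_le by force
  have "pres_map A vs q $ a = (\<Sum>i<r. \<Sum>j<nn. coeff (q $ i) j * bv i j $ a)" by (rule pres_sum[OF a N])
  also have "\<dots> = (\<Sum>p<nn. coeff (q $ fst (ipos p)) (snd (ipos p)) * bv (fst (ipos p)) (snd (ipos p)) $ a)"
    by (rule sum_to_pos) (use m_le q bv_zero a in auto)
  also have "\<dots> = (W *\<^sub>v cv q) $ a"
    unfolding W_mult[OF cv a] by (rule sum.cong) (auto simp: cv_def)
  finally show "pres_map A vs q $ a = (W *\<^sub>v cv q) $ a" .
qed

lemma gen: assumes w: "w \<in> carrier_vec nn" shows "\<exists>q\<in>carrier_vec r. w = pres_map A vs q"
proof -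
  define c where "c = W' *\<^sub>v w"
  have c: "c \<in> carrier_vec nn" unfolding c_def using W' w by simp
  define q where "q = vec r (\<lambda>i. if i < r' then (\<Sum>j<ms ! i. monom (c $ pos (i,j)) j) else 0)"
  have qc: "coeff (q $ i) j = (if i < r' \<and> j < ms ! i then c $ pos (i,j) else 0)" if "i < r" for i j
    using that unfolding q_def by (auto simp: coeff_sum)
  have cvq: "cv q = c"
  proof (rule eq_vecI)
    fix p assume "p < dim_vec c"
    then have p: "p < nn" using c by simp
    then show "cv q $ p = c $ p" using qc[of "fst (ipos p)" "snd (ipos p)"] ipos_r[OF p] r'_r pos_ipos[OF p]
      unfolding cv_def by simp
  qed (use c in \<open>simp add: cv_def\<close>)
  have "pres_map A vs q = W *\<^sub>v cv q" by (rule FW) (use qc in auto)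
  also have "\<dots> = (W * W') *\<^sub>v w" unfolding cvq c_def using W_car W' w by simp
  also have "\<dots> = w" using WW' w by simp
  finally show ?thesis unfolding q_def by (intro bexI[of _ q]) (auto simp: q_def)
qed

end


context mctx begin

lemma Xf_car: "Xf \<in> carrier_mat r r" unfolding Xf_def by simp

lemma Xf_coeff: assumes i: "i < r" and k: "k < r"
  shows "coeff (Xf $$ (i,k)) j = (if i = k \<and> j = ms ! i then 1 else 0)
     - (if i < r' \<and> k < r' \<and> j < ms ! i then dd k $ pos (i,j) else 0)"
proof (cases "i < r' \<and> k < r'")
  case True
  have "coeff (Xf $$ (i,k)) j = coeff ((if i = k then monom 1 (ms ! i) else 0) - (\<Sum>j'<ms ! i. monom (dd k $ pos (i,j')) j')) j"
    using True i k by (simp add: Xf_def Xmat_def)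
  also have "\<dots> = (if i = k \<and> j = ms ! i then 1 else 0) - (\<Sum>j'<ms ! i. if j = j' then dd k $ pos (i,j') else 0)"
    by (simp add: coeff_sum coeff_monom)
  also have "(\<Sum>j'<ms ! i. if j = j' then dd k $ pos (i,j') else 0) = (if j < ms ! i then dd k $ pos (i,j) else 0)"
    by (simp add: sum.delta)
  finally show ?thesis using True by simp
next
  case False
  have m: "i = k \<Longrightarrow> ms ! i = 0" using False i ms0 by auto
  show ?thesis using False i k m by (auto simp: Xf_def coeff_1)
qed

lemma Xf_coeff_high: "i < r \<Longrightarrow> k < r \<Longrightarrow> ms ! i \<le> j \<Longrightarrow> coeff (Xf $$ (i,k)) j = (if i = k \<and> j = ms ! i then 1 else 0)"
  using Xf_coeff by simp

lemma dd_car: "k < r \<Longrightarrow> dd k \<in> carrier_vec nn"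
  unfolding dd_def using W' bv_car by simp

lemma col_Xf: "k < r \<Longrightarrow> i < r \<Longrightarrow> col Xf k $ i = Xf $$ (i,k)"
  using Xf_car by simp

lemma pres_col: assumes k: "k < r" shows "pres_map A vs (col Xf k) = 0\<^sub>v nn"
proof (rule eq_vecI)
  show "dim_vec (pres_map A vs (col Xf k)) = dim_vec (0\<^sub>v nn)" using pres_map_carrier[OF A vs_car] by simp
  fix a assume "a < dim_vec (0\<^sub>v nn)"
  then have a: "a < nn" by simp
  define T1 where "T1 i j = (if i = k \<and> j = ms ! i then 1 else (0::'a))" for i j
  define T2 where "T2 i j = (if i < r' \<and> k < r' \<and> j < ms ! i then dd k $ pos (i,j) else 0)" for i j
  have N: "\<forall>i<r. \<forall>j\<ge>Suc nn. coeff (col Xf k $ i) j = 0"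
    using col_Xf[OF k] Xf_coeff[OF _ k] m_le by fastforce
  have "pres_map A vs (col Xf k) $ a = (\<Sum>i<r. \<Sum>j<Suc nn. coeff (col Xf k $ i) j * bv i j $ a)"
    by (rule pres_sum[OF a N])
  also have "\<dots> = (\<Sum>i<r. \<Sum>j<Suc nn. T1 i j * bv i j $ a) - (\<Sum>i<r. \<Sum>j<Suc nn. T2 i j * bv i j $ a)"
    by (simp add: col_Xf[OF k] Xf_coeff[OF _ k] T1_def T2_def sum_subtractf left_diff_distrib)
  also have "(\<Sum>i<r. \<Sum>j<Suc nn. T1 i j * bv i j $ a) = (\<Sum>i<r. if i = k then bv k (ms ! k) $ a else 0)"
  proof (rule sum.cong, simp)
    fix i assume i: "i \<in> {..<r}"
    have "ms ! i < Suc nn" using m_le[of i] i by simp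
    then show "(\<Sum>j<Suc nn. T1 i j * bv i j $ a) = (if i = k then bv k (ms ! k) $ a else 0)"
    proof -
      have "(\<Sum>j<Suc nn. T1 i j * bv i j $ a) = (\<Sum>j<Suc nn. if i = k \<and> j = ms ! i then bv i j $ a else 0)"
        by (rule sum.cong) (auto simp: T1_def)
      also have "\<dots> = (if i = k then (\<Sum>j<Suc nn. if j = ms ! i then bv i j $ a else 0) else 0)" by auto
      also have "\<dots> = (if i = k then bv k (ms ! k) $ a else 0)" using \<open>ms ! i < Suc nn\<close> by (auto simp: sum.delta')
      finally show ?thesis .
    qed
  qed
  also have "\<dots> = bv k (ms ! k) $ a" using k by simp
  also have "(\<Sum>i<r. \<Sum>j<Suc nn. T2 i j * bv i j $ a) = (\<Sum>p<nn. T2 (fst (ipos p)) (snd (ipos p)) * bv (fst (ipos p)) (snd (ipos p)) $ a)"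
  proof (rule sum_to_pos)
    show "\<And>i. i < r \<Longrightarrow> ms ! i \<le> Suc nn" using m_le le_SucI by blast
  qed (auto simp: T2_def)
  also have "\<dots> = bv k (ms ! k) $ a"
  proof (cases "k < r'")
    case True
    have "(\<Sum>p<nn. T2 (fst (ipos p)) (snd (ipos p)) * bv (fst (ipos p)) (snd (ipos p)) $ a)
        = (\<Sum>p<nn. bv (fst (ipos p)) (snd (ipos p)) $ a * dd k $ p)"
    proof (rule sum.cong, simp)
      fix p assume "p \<in> {..<nn}"
      then have p: "p < nn" by simp
      show "T2 (fst (ipos p)) (snd (ipos p)) * bv (fst (ipos p)) (snd (ipos p)) $ a = bv (fst (ipos p)) (snd (ipos p)) $ a * dd k $ p"
        using ipos_r[OF p] pos_ipos[OF p] True unfolding T2_def by simp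
    qed
    also have "\<dots> = (W *\<^sub>v dd k) $ a" using W_mult[OF dd_car[OF k] a] by simp
    also have "W *\<^sub>v dd k = bv k (ms ! k)"
      unfolding dd_def using W_car W' bv_car[OF k] WW' by (simp add: assoc_mult_mat_vec[symmetric, of W nn nn W' nn])
    finally show ?thesis .
  next
    case False
    then show ?thesis using bv_zero[OF _ k] a by (simp add: T2_def)
  qed
  finally show "pres_map A vs (col Xf k) $ a = 0\<^sub>v nn $ a" using a by simp
qed

lemma mat_vec_idx: assumes M: "M \<in> carrier_mat m n" and v: "v \<in> carrier_vec n" and i: "i < m"
  shows "(M *\<^sub>v v) $ i = (\<Sum>k<n. M $$ (i,k) * v $ k)"
  using M v i by (auto simp: scalar_prod_def atLeast0LessThan)

lemma pres_ker: assumes p: "p \<in> carrier_vec r" shows "pres_map A vs (Xf *\<^sub>v p) = 0\<^sub>v nn"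
proof (rule eq_vecI)
  show "dim_vec (pres_map A vs (Xf *\<^sub>v p)) = dim_vec (0\<^sub>v nn)" using pres_map_carrier[OF A vs_car] by simp
  fix a assume "a < dim_vec (0\<^sub>v nn)"
  then have a: "a < nn" by simp
  let ?E = "mat_eval_poly A"
  have "pres_map A vs (Xf *\<^sub>v p) $ a = (\<Sum>i<r. (?E ((Xf *\<^sub>v p) $ i) *\<^sub>v vs ! i) $ a)"
    using pres_map_comp[OF A vs_car a] vs_len by simp
  also have "\<dots> = (\<Sum>i<r. \<Sum>k<r. (?E (p $ k) *\<^sub>v (?E (Xf $$ (i,k)) *\<^sub>v vs ! i)) $ a)"
  proof (rule sum.cong, simp)
    fix i assume "i \<in> {..<r}"
    then have i: "i < r" by simp
    have "(?E ((Xf *\<^sub>v p) $ i) *\<^sub>v vs ! i) $ a = (?E (\<Sum>k<r. Xf $$ (i,k) * p $ k) *\<^sub>v vs ! i) $ a"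
      using mat_vec_idx[OF Xf_car p i] by simp
    also have "\<dots> = (\<Sum>k<r. (?E (Xf $$ (i,k) * p $ k) *\<^sub>v vs ! i) $ a)"
      by (rule Ev_sum[OF A vs_i[OF i] a]) simp
    also have "\<dots> = (\<Sum>k<r. (?E (p $ k) *\<^sub>v (?E (Xf $$ (i,k)) *\<^sub>v vs ! i)) $ a)"
      by (rule sum.cong) (simp_all add: mult.commute[of "Xf $$ (i,_)"] Ev_mult[OF A vs_i[OF i]])
    finally show "(?E ((Xf *\<^sub>v p) $ i) *\<^sub>v vs ! i) $ a = (\<Sum>k<r. (?E (p $ k) *\<^sub>v (?E (Xf $$ (i,k)) *\<^sub>v vs ! i)) $ a)" .
  qed
  also have "\<dots> = (\<Sum>k<r. \<Sum>i<r. (?E (p $ k) *\<^sub>v (?E (Xf $$ (i,k)) *\<^sub>v vs ! i)) $ a)"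
    by (rule sum.swap)
  also have "\<dots> = (\<Sum>k<r. (?E (p $ k) *\<^sub>v pres_map A vs (col Xf k)) $ a)"
  proof (rule sum.cong, simp)
    fix k assume "k \<in> {..<r}"
    then have k: "k < r" by simp
    show "(\<Sum>i<r. (?E (p $ k) *\<^sub>v (?E (Xf $$ (i,k)) *\<^sub>v vs ! i)) $ a) = (?E (p $ k) *\<^sub>v pres_map A vs (col Xf k)) $ a"
    proof (rule Ev_lin[symmetric, OF A a])
      show "\<And>i. i \<in> {..<r} \<Longrightarrow> ?E (Xf $$ (i,k)) *\<^sub>v vs ! i \<in> carrier_vec nn"
        using Ev_carrier[OF A vs_i] by simp
      show "pres_map A vs (col Xf k) \<in> carrier_vec nn" by (rule pres_map_carrier[OF A vs_car])
      show "\<And>b. b < nn \<Longrightarrow> pres_map A vs (col Xf k) $ b = (\<Sum>i\<in>{..<r}. (?E (Xf $$ (i,k)) *\<^sub>v vs ! i) $ b)"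
        using pres_map_comp[OF A vs_car] vs_len col_Xf[OF k] by simp
    qed simp
  qed
  also have "\<dots> = 0" using pres_col Ev_zero_vec[OF A] a by simp
  finally show "pres_map A vs (Xf *\<^sub>v p) $ a = 0\<^sub>v nn $ a" using a by simp
qed

end


context mctx begin

lemma div_red: "\<forall>q. q \<in> carrier_vec r \<longrightarrow> (\<forall>i<r. \<forall>j\<ge>ms ! i + c. coeff (q $ i) j = 0) \<longrightarrow>
   (\<exists>p\<in>carrier_vec r. \<forall>i<r. \<forall>j\<ge>ms ! i. coeff ((q - Xf *\<^sub>v p) $ i) j = 0)"
proof (induct c)
  case 0
  show ?case
  proof (intro allI impI)
    fix q :: "'a poly vec" assume q: "q \<in> carrier_vec r" and h: "\<forall>i<r. \<forall>j\<ge>ms ! i + 0. coeff (q $ i) j = 0"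
    have "q - Xf *\<^sub>v 0\<^sub>v r = q" using q Xf_car by (simp add: mat_vec_zero)
    then show "\<exists>p\<in>carrier_vec r. \<forall>i<r. \<forall>j\<ge>ms ! i. coeff ((q - Xf *\<^sub>v p) $ i) j = 0"
      using h by (intro bexI[of _ "0\<^sub>v r"]) auto
  qed
next
  case (Suc c)
  show ?case
  proof (intro allI impI)
    fix q :: "'a poly vec" assume q: "q \<in> carrier_vec r" and h: "\<forall>i<r. \<forall>j\<ge>ms ! i + Suc c. coeff (q $ i) j = 0"
    define av where "av = vec r (\<lambda>k. monom (coeff (q $ k) (ms ! k + c)) c)"
    have av: "av \<in> carrier_vec r" unfolding av_def by simp
    define q1 where "q1 = q - Xf *\<^sub>v av"
    have q1: "q1 \<in> carrier_vec r" unfolding q1_def using q av Xf_car by simp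
    have q1i: "q1 $ i = q $ i - (\<Sum>k<r. Xf $$ (i,k) * av $ k)" if "i < r" for i
      unfolding q1_def using that q mat_vec_idx[OF Xf_car av that] Xf_car av by simp
    have h1: "\<forall>i<r. \<forall>j\<ge>ms ! i + c. coeff (q1 $ i) j = 0"
    proof (intro allI impI)
      fix i j assume i: "i < r" and j: "ms ! i + c \<le> j"
      have "coeff (q1 $ i) j = coeff (q $ i) j - (\<Sum>k<r. coeff (Xf $$ (i,k) * av $ k) j)"
        unfolding q1i[OF i] by (simp add: coeff_sum)
      also have "(\<Sum>k<r. coeff (Xf $$ (i,k) * av $ k) j) = (\<Sum>k<r. if k = i then (if j = ms ! i + c then coeff (q $ i) (ms ! i + c) else 0) else 0)"
      proof (rule sum.cong, simp)
        fix k assume "k \<in> {..<r}"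
        then have k: "k < r" by simp
        have "coeff (Xf $$ (i,k) * av $ k) j = coeff (q $ k) (ms ! k + c) * coeff (Xf $$ (i,k)) (j - c)"
          using j k unfolding av_def by (simp add: mult.commute[of "Xf $$ (i,k)"] coeff_monom_mult)
        also have "\<dots> = (if k = i then (if j = ms ! i + c then coeff (q $ i) (ms ! i + c) else 0) else 0)"
          using Xf_coeff_high[OF i k, of "j - c"] j by auto
        finally show "coeff (Xf $$ (i,k) * av $ k) j = (if k = i then (if j = ms ! i + c then coeff (q $ i) (ms ! i + c) else 0) else 0)" .
      qed
      also have "\<dots> = (if j = ms ! i + c then coeff (q $ i) (ms ! i + c) else 0)" using i by simp
      finally show "coeff (q1 $ i) j = 0" using h i j by auto
    qed
    from Suc q1 h1 obtain p1 where p1: "p1 \<in> carrier_vec r"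
      and hp1: "\<forall>i<r. \<forall>j\<ge>ms ! i. coeff ((q1 - Xf *\<^sub>v p1) $ i) j = 0" by blast
    have eq: "(q - Xf *\<^sub>v (av + p1)) $ i = (q1 - Xf *\<^sub>v p1) $ i" if i: "i < r" for i
    proof -
      have "(q - Xf *\<^sub>v (av + p1)) $ i = q $ i - (\<Sum>k<r. Xf $$ (i,k) * (av $ k + p1 $ k))"
        using mat_vec_idx[OF Xf_car _ i, of "av + p1"] av p1 q i Xf_car by simp
      also have "\<dots> = q1 $ i - (\<Sum>k<r. Xf $$ (i,k) * p1 $ k)"
        unfolding q1i[OF i] by (simp add: distrib_left sum.distrib)
      also have "\<dots> = (q1 - Xf *\<^sub>v p1) $ i"
        using mat_vec_idx[OF Xf_car p1 i] q1 p1 i Xf_car by simp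
      finally show ?thesis .
    qed
    show "\<exists>p\<in>carrier_vec r. \<forall>i<r. \<forall>j\<ge>ms ! i. coeff ((q - Xf *\<^sub>v p) $ i) j = 0"
      using hp1 eq av p1 by (intro bexI[of _ "av + p1"]) auto
  qed
qed

lemma pres_diff: assumes q1: "q1 \<in> carrier_vec r" and q2: "q2 \<in> carrier_vec r" and a: "a < nn"
  shows "pres_map A vs (q1 - q2) $ a = pres_map A vs q1 $ a - pres_map A vs q2 $ a"
  using q1 q2 unfolding pres_map_comp[OF A vs_car a] vs_len
  by (simp add: Ev_diff[OF A vs_i a] sum_subtractf)

lemma ker_sub: assumes q: "q \<in> carrier_vec r" and k: "pres_map A vs q = 0\<^sub>v nn"
  shows "\<exists>p\<in>carrier_vec r. q = Xf *\<^sub>v p"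
proof -
  define c where "c = Suc (\<Sum>i<r. degree (q $ i))"
  have hc: "\<forall>i<r. \<forall>j\<ge>ms ! i + c. coeff (q $ i) j = 0"
  proof (intro allI impI)
    fix i j assume i: "i < r" and j: "ms ! i + c \<le> j"
    have "degree (q $ i) \<le> (\<Sum>i<r. degree (q $ i))" using i by (intro member_le_sum) auto
    then show "coeff (q $ i) j = 0" using j unfolding c_def by (intro coeff_eq_0) auto
  qed
  from div_red q hc obtain p where p: "p \<in> carrier_vec r"
    and hp: "\<forall>i<r. \<forall>j\<ge>ms ! i. coeff ((q - Xf *\<^sub>v p) $ i) j = 0" by blast
  define q' where "q' = q - Xf *\<^sub>v p"
  have q': "q' \<in> carrier_vec r" unfolding q'_def using q p Xf_car by simp
  have Xp: "Xf *\<^sub>v p \<in> carrier_vec r" using p Xf_car by simp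
  have z: "pres_map A vs q' = 0\<^sub>v nn"
  proof (rule eq_vecI)
    fix a assume "a < dim_vec (0\<^sub>v nn)"
    then have a: "a < nn" by simp
    show "pres_map A vs q' $ a = 0\<^sub>v nn $ a"
      unfolding q'_def pres_diff[OF q Xp a] k pres_ker[OF p] using a by simp
  qed (use pres_map_carrier[OF A vs_car] in simp)
  have "W *\<^sub>v cv q' = 0\<^sub>v nn" using FW[of q'] hp z unfolding q'_def by simp
  then have "W' *\<^sub>v (W *\<^sub>v cv q') = 0\<^sub>v nn" using W' by (simp add: mat_vec_zero)
  then have cv0: "cv q' = 0\<^sub>v nn" using W'W W' W_car by (simp add: assoc_mult_mat_vec[symmetric, of W' nn nn W nn] cv_def)
  have q'0: "q' $ i = 0" if i: "i < r" for i
  proof (rule poly_eqI)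
    fix j
    show "coeff (q' $ i) j = coeff 0 j"
    proof (cases "i < r' \<and> j < ms ! i")
      case True
      then have D: "(i,j) \<in> D" by (simp add: D_iff)
      have "cv q' $ pos (i,j) = 0" using cv0 pos_lt[OF D] by simp
      then show ?thesis using pos_lt[OF D] ipos_pos[OF D] by (simp add: cv_def)
    next
      case False
      then have "ms ! i \<le> j" using ms0 i by (cases "i < r'") auto
      then show ?thesis using hp i unfolding q'_def by simp
    qed
  qed
  have "q = Xf *\<^sub>v p"
  proof (rule eq_vecI)
    fix i assume "i < dim_vec (Xf *\<^sub>v p)"
    then have i: "i < r" using Xf_car by simp
    have "q' $ i = q $ i - (Xf *\<^sub>v p) $ i" unfolding q'_def using i Xf_car by simp
    then show "q $ i = (Xf *\<^sub>v p) $ i" using q'0[OF i] by simp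
  qed (use q Xp Xf_car in simp)
  then show ?thesis using p by blast
qed

lemma ker_eq: "{q \<in> carrier_vec r. pres_map A vs q = 0\<^sub>v nn} = {Xf *\<^sub>v p | p. p \<in> carrier_vec r}"
proof
  show "{q \<in> carrier_vec r. pres_map A vs q = 0\<^sub>v nn} \<subseteq> {Xf *\<^sub>v p | p. p \<in> carrier_vec r}"
    using ker_sub by blast
  show "{Xf *\<^sub>v p | p. p \<in> carrier_vec r} \<subseteq> {q \<in> carrier_vec r. pres_map A vs q = 0\<^sub>v nn}"
    using pres_ker Xf_car by auto
qed

end


context mctx begin

lemma B_eq: "W' * A * W = Bmat dd"
proof (rule eq_matI)
  show "dim_row (W' * A * W) = dim_row (Bmat dd)" "dim_col (W' * A * W) = dim_col (Bmat dd)"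
    using W' W_car A by (simp_all add: Bmat_def)
  fix a b assume "a < dim_row (Bmat dd)" "b < dim_col (Bmat dd)"
  then have a: "a < nn" and b: "b < nn" by (auto simp: Bmat_def)
  obtain i j where ij: "ipos b = (i,j)" by force
  have ir: "i < r'" "j < ms ! i" using ipos_r[OF b] ij by auto
  have colW: "col W b = bv i j" using W_col[OF b] ij by simp
  have "(W' * A * W) $$ (a,b) = col (W' * A * W) b $ a" using a b W' A W_car by simp
  also have "col (W' * A * W) b = (W' * A) *\<^sub>v col W b"
    by (rule col_mult2) (use W' A W_car b in auto)
  also have "\<dots> = W' *\<^sub>v (A *\<^sub>v bv i j)"
    unfolding colW using W' A bv_car[of i j] ir r'_r
    by (simp add: assoc_mult_mat_vec[of W' nn nn A nn])
  also have "A *\<^sub>v bv i j = bv i (Suc j)"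
    unfolding bv_def using pow_mat_vec_Suc[OF A vs_i] ir r'_r by simp
  finally have e: "(W' * A * W) $$ (a,b) = (W' *\<^sub>v bv i (Suc j)) $ a" .
  show "(W' * A * W) $$ (a,b) = Bmat dd $$ (a,b)"
  proof (cases "Suc j < ms ! i")
    case True
    have D: "(i, Suc j) \<in> D" using True ir by (simp add: D_iff)
    have "bv i (Suc j) = col W (pos (i, Suc j))" using W_col[OF pos_lt[OF D]] ipos_pos[OF D] by simp
    then have "W' *\<^sub>v bv i (Suc j) = col (1\<^sub>m nn) (pos (i, Suc j))"
      using W' W_car pos_lt[OF D] W'W by (metis col_mult2)
    then show ?thesis using e a b ij True pos_lt[OF D] by (simp add: Bmat_def)
  next
    case False
    then have "Suc j = ms ! i" using ir by simp
    then show ?thesis using e a b ij False by (simp add: Bmat_def dd_def)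
  qed
qed

lemma charpoly_eq: "char_poly A = det (Xmat dd)"
proof -
  have B: "W' * A * W \<in> carrier_mat nn nn" using W' A W_car by simp
  have "W * (W' * A * W) * W' = (W * W') * A * (W * W')"
    using W' A W_car by (simp add: assoc_mult_mat[of _ nn nn _ nn _ nn])
  then have "A = W * (W' * A * W) * W'" using WW' A by simp
  then have "similar_mat A (W' * A * W)"
    by (intro similar_matI[of A "W' * A * W" W W' nn]) (use A B W_car W' WW' W'W in auto)
  then have "char_poly A = char_poly (Bmat dd)" using B_eq char_poly_similar by metis
  then show ?thesis unfolding char_poly_def det_main .
qed

lemma det_Xf: "det Xf = det (Xmat dd)"
proof -
  have Xm: "Xmat dd \<in> carrier_mat r' r'" by (simp add: Xmat_def)
  have "Xf = four_block_mat (Xmat dd) (0\<^sub>m r' (r - r')) (0\<^sub>m (r - r') r') (1\<^sub>m (r - r'))"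
    using r'_r Xm by (intro eq_matI) (auto simp: Xf_def)
  then have "det Xf = det (Xmat dd) * det (1\<^sub>m (r - r') :: 'a poly mat)"
    using det_four_block_mat_upper_right_zero[OF Xm refl] by simp
  then show ?thesis by simp
qed

lemma det_Xf_char: "det Xf = char_poly A" using det_Xf charpoly_eq by simp

lemma Y_exists: assumes f1: "mat_eval_poly A f1 = 0\<^sub>m nn nn"
  shows "\<exists>Y\<in>carrier_mat r r. Y * Xf = f1 \<cdot>\<^sub>m 1\<^sub>m r"
proof -
  define fk where "fk k = vec r (\<lambda>i. if i = k then f1 else 0)" for k
  have fk_ker: "\<exists>y\<in>carrier_vec r. fk k = Xf *\<^sub>v y" if k: "k < r" for k
  proof (rule ker_sub)
    show "fk k \<in> carrier_vec r" by (simp add: fk_def)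
    show "pres_map A vs (fk k) = 0\<^sub>v nn"
    proof (rule eq_vecI)
      fix a assume "a < dim_vec (0\<^sub>v nn)"
      then have a: "a < nn" by simp
      have "pres_map A vs (fk k) $ a = (\<Sum>i<r. (mat_eval_poly A (fk k $ i) *\<^sub>v vs ! i) $ a)"
        using pres_map_comp[OF A vs_car a] vs_len by simp
      also have "\<dots> = 0"
      proof (rule sum.neutral, intro ballI)
        fix i assume "i \<in> {..<r}"
        then have i: "i < r" by simp
        have "mat_eval_poly A (fk k $ i) = 0\<^sub>m nn nn"
          using i f1 mat_eval_poly_0[OF A] by (simp add: fk_def)
        then show "(mat_eval_poly A (fk k $ i) *\<^sub>v vs ! i) $ a = 0"
          using zero_mat_vec[OF vs_i[OF i]] a by simp
      qed
      finally show "pres_map A vs (fk k) $ a = 0\<^sub>v nn $ a" using a by simp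
    qed (use pres_map_carrier[OF A vs_car] in simp)
  qed
  define y where "y k = (SOME y. y \<in> carrier_vec r \<and> fk k = Xf *\<^sub>v y)" for k
  have y: "y k \<in> carrier_vec r" "fk k = Xf *\<^sub>v y k" if "k < r" for k
    using someI_ex[OF fk_ker[OF that, unfolded Bex_def]] unfolding y_def by auto
  define Y where "Y = mat r r (\<lambda>(i,k). y k $ i)"
  have Y: "Y \<in> carrier_mat r r" unfolding Y_def by simp
  have colY: "col Y k = y k" if "k < r" for k
    using y[OF that] that unfolding Y_def by (intro eq_vecI) auto
  have XY: "Xf * Y = f1 \<cdot>\<^sub>m 1\<^sub>m r"
  proof (rule eq_matI)
    fix i k assume "i < dim_row (f1 \<cdot>\<^sub>m 1\<^sub>m r)" "k < dim_col (f1 \<cdot>\<^sub>m 1\<^sub>m r)"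
    then have i: "i < r" and k: "k < r" by auto
    have "(Xf * Y) $$ (i,k) = (Xf *\<^sub>v col Y k) $ i" using i k Xf_car Y by simp
    also have "\<dots> = fk k $ i" using colY[OF k] y[OF k] by simp
    finally show "(Xf * Y) $$ (i,k) = (f1 \<cdot>\<^sub>m 1\<^sub>m r) $$ (i,k)" using i k by (simp add: fk_def)
  qed (use Xf_car Y in auto)
  have dX: "det Xf \<noteq> 0" using det_Xf_char degree_monic_char_poly[OF A] by auto
  note adj = adj_mat[OF Xf_car]
  let ?adj = "adj_mat Xf"
  have e1: "det Xf \<cdot>\<^sub>m Y = f1 \<cdot>\<^sub>m ?adj"
  proof -
    have "det Xf \<cdot>\<^sub>m Y = (?adj * Xf) * Y" using adj(3) Y by (simp add: mult_smult_assoc_mat[of "1\<^sub>m r" r r Y r])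
    also have "\<dots> = ?adj * (Xf * Y)" using adj(1) Xf_car Y by (simp add: assoc_mult_mat[of _ r r _ r _ r])
    also have "\<dots> = f1 \<cdot>\<^sub>m ?adj" unfolding XY using adj(1) by (simp add: mult_smult_distrib[of _ r r _ r])
    finally show ?thesis .
  qed
  have "det Xf \<cdot>\<^sub>m (Y * Xf) = det Xf \<cdot>\<^sub>m (f1 \<cdot>\<^sub>m 1\<^sub>m r)"
  proof -
    have "det Xf \<cdot>\<^sub>m (Y * Xf) = (det Xf \<cdot>\<^sub>m Y) * Xf" using Y Xf_car by (simp add: mult_smult_assoc_mat)
    also have "\<dots> = f1 \<cdot>\<^sub>m (?adj * Xf)" unfolding e1 using adj(1) Xf_car by (simp add: mult_smult_assoc_mat)
    also have "\<dots> = det Xf \<cdot>\<^sub>m (f1 \<cdot>\<^sub>m 1\<^sub>m r)" unfolding adj(3) by (intro eq_matI) auto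
    finally show ?thesis .
  qed
  then have "Y * Xf = f1 \<cdot>\<^sub>m 1\<^sub>m r"
  proof -
    assume h: "det Xf \<cdot>\<^sub>m (Y * Xf) = det Xf \<cdot>\<^sub>m (f1 \<cdot>\<^sub>m 1\<^sub>m r)"
    show ?thesis
    proof (rule eq_matI)
      fix i k assume "i < dim_row (f1 \<cdot>\<^sub>m 1\<^sub>m r)" "k < dim_col (f1 \<cdot>\<^sub>m 1\<^sub>m r)"
      then have i: "i < r" and k: "k < r" by auto
      have "det Xf * (Y * Xf) $$ (i,k) = det Xf * (f1 \<cdot>\<^sub>m 1\<^sub>m r) $$ (i,k)"
        using arg_cong[OF h, of "\<lambda>M. M $$ (i,k)"] i k Y Xf_car by simp
      then show "(Y * Xf) $$ (i,k) = (f1 \<cdot>\<^sub>m 1\<^sub>m r) $$ (i,k)" using dX by simp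
    qed (use Y Xf_car in auto)
  qed
  then show ?thesis using Y by blast
qed

end


lemma filter_nz_sorted: "sorted (rev xs) \<Longrightarrow> filter (\<lambda>m::nat. m \<noteq> 0) xs = takeWhile (\<lambda>m. m \<noteq> 0) xs"
proof (induct xs)
  case (Cons x xs)
  have s: "sorted (rev xs)" "\<forall>y\<in>set xs. y \<le> x" using Cons(2) by (auto simp: sorted_append)
  show ?case
  proof (cases "x = 0")
    case True
    then have "\<forall>y\<in>set xs. y = 0" using s by auto
    then have "filter (\<lambda>m::nat. m \<noteq> 0) xs = []" by (simp add: filter_empty_conv)
    then show ?thesis using True by simp
  qed (use Cons s in simp)
qed simp

lemma mat_unit_vec: fixes M :: "'a :: comm_ring_1 mat" assumes M: "M \<in> carrier_mat n n" and p: "p < n"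
  shows "M *\<^sub>v unit_vec n p = col M p"
  using M p by (intro eq_vecI) auto

lemma pow_vec_car: "A \<in> carrier_mat n n \<Longrightarrow> v \<in> carrier_vec n \<Longrightarrow> A ^\<^sub>m j *\<^sub>v v \<in> carrier_vec n"
  by (meson mult_mat_vec_carrier pow_carrier_mat)

theorem mainTheorem11:
  fixes l :: nat and \<pi> :: "'a :: {idom, ring_char_0} \<Rightarrow> 'k :: field"
    and f1 :: "'a poly" and d1 :: nat
    and n :: nat and A :: "'a mat" and r :: nat and gens :: "'a vec list" and ms :: "nat list"
  assumes S: "unramified_int_ring l TYPE('a)"
    and res: "residue_map l \<pi>"
    and f1_monic: "monic f1" and f1_deg: "degree f1 = d1"
    and f1_cong: "poly_cong_l l f1 (monom 1 d1)"
    and A: "A \<in> carrier_mat n n"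
    and R_module: "mat_eval_poly A f1 = 0\<^sub>m n n"
    and gens: "length gens = r" "set gens \<subseteq> carrier_vec n"
    and generated: "\<forall>w \<in> carrier_vec n. \<exists>q \<in> carrier_vec r. w = pres_map A gens q"
    and ms: "length ms = r" and Hp: "Hp_is (map_mat \<pi> A) ms"
  shows "\<exists>X Y vs. X \<in> carrier_mat r r \<and> Y \<in> carrier_mat r r \<and>
           Y * X = f1 \<cdot>\<^sub>m 1\<^sub>m r \<and> det X = char_poly A \<and>
           length vs = r \<and> set vs \<subseteq> carrier_vec n \<and>
           (\<forall>w \<in> carrier_vec n. \<exists>q \<in> carrier_vec r. w = pres_map A vs q) \<and>
           {q \<in> carrier_vec r. pres_map A vs q = 0\<^sub>v n} = {X *\<^sub>v p | p. p \<in> carrier_vec r} \<and>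
           (\<forall>i < r. \<forall>j < r. poly_cong_l l (X $$ (i, j))
                (if i = j then monom 1 (ms ! i) else 0))"
proof -
  have hadd: "\<And>a b. \<pi> (a + b) = \<pi> a + \<pi> b" and hmul: "\<And>a b. \<pi> (a * b) = \<pi> a * \<pi> b"
    and hone: "\<pi> 1 = 1" and hsurj: "surj \<pi>" and hker: "\<And>a. \<pi> a = 0 \<longleftrightarrow> of_nat l dvd a"
    using res unfolding residue_map_def by auto
  have hzero: "\<pi> 0 = 0" using hker by simp
  interpret h: comm_ring_hom \<pi> by unfold_locales (auto simp: hadd hmul hone hzero)
  have Sdvr: "\<And>s::'a. s \<noteq> 0 \<Longrightarrow> \<exists>u k. u dvd 1 \<and> s = u * of_nat l ^ k"
    using S unfolding unramified_int_ring_def by auto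
  have srt: "sorted (rev ms)" and jnf: "jordan_nf (map_mat \<pi> A) (map (\<lambda>m. (m, 0)) (filter (\<lambda>m. m \<noteq> 0) ms))"
    using Hp unfolding Hp_is_def by auto
  define r' where "r' = length (takeWhile (\<lambda>m::nat. m \<noteq> 0) ms)"
  have filt: "filter (\<lambda>m. m \<noteq> 0) ms = take r' ms"
    unfolding filter_nz_sorted[OF srt] r'_def by (rule takeWhile_eq_take)
  have r'le: "r' \<le> length ms" unfolding r'_def by (rule length_takeWhile_le)
  have mpos: "0 < ms ! i" if "i < r'" for i
  proof -
    have "ms ! i \<in> set (takeWhile (\<lambda>m. m \<noteq> 0) ms)"
      using that unfolding r'_def by (metis nth_mem takeWhile_nth)
    then show ?thesis by (auto dest: set_takeWhileD)
  qed
  have mzero: "ms ! i = 0" if "r' \<le> i" "i < r" for i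
  proof -
    have "r' < length ms" using that ms by simp
    then have "ms ! r' = 0" unfolding r'_def using nth_length_takeWhile by fastforce
    moreover have "ms ! i \<le> ms ! r'" using sorted_rev_nth_mono[OF srt that(1)] that ms by simp
    ultimately show ?thesis by simp
  qed
  interpret blk ms r' by unfold_locales (use r'le mpos in auto)
  define J where "J = jordan_matrix (map (\<lambda>m. (m, 0::'k)) (take r' ms))"
  have simJ: "similar_mat (map_mat \<pi> A) J" using jnf unfolding jordan_nf_def filt J_def by auto
  from similar_matD[OF simJ] obtain n' P Q where PQ: "{map_mat \<pi> A, J, P, Q} \<subseteq> carrier_mat n' n'"
    "P * Q = 1\<^sub>m n'" "Q * P = 1\<^sub>m n'" "map_mat \<pi> A = P * J * Q" by blast
  have n': "n' = n" using PQ(1) A by auto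
  have sJ: "sum_list (take r' ms) = nn"
  proof -
    have "sum_list (take r' ms) = (\<Sum>k<r'. take r' ms ! k)" using r'le by (simp add: sum_list_sum_nth atLeast0LessThan min_def)
    also have "\<dots> = (\<Sum>k<r'. ms ! k)" by simp
    finally show ?thesis unfolding nn_def s_def .
  qed
  have nn: "nn = n"
  proof -
    have "J \<in> carrier_mat n n" using PQ(1) n' by auto
    moreover have "dim_row J = sum_list (take r' ms)" unfolding J_def by (simp add: comp_def)
    ultimately show ?thesis using sJ by simp
  qed
  have P: "P \<in> carrier_mat n n" and Q: "Q \<in> carrier_mat n n" and Jc: "J \<in> carrier_mat n n"
    using PQ(1) n' by auto
  have piA: "map_mat \<pi> A \<in> carrier_mat n n" using A by simp
  have AP: "map_mat \<pi> A * P = P * J"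
  proof -
    have "map_mat \<pi> A * P = P * J * (Q * P)" using PQ(4) P Q Jc by (simp add: assoc_mult_mat[of _ n n _ n _ n])
    then show ?thesis using PQ(3) n' P Jc by simp
  qed
  have sI: "sum_list (take i (take r' ms)) = s i" if "i \<le> r'" for i
  proof -
    have L: "length (take i (take r' ms)) = i" using that r'le by simp
    have "sum_list (take i (take r' ms)) = (\<Sum>k<i. take i (take r' ms) ! k)"
      by (simp only: sum_list_sum_nth L atLeast0LessThan)
    also have "\<dots> = (\<Sum>k<i. ms ! k)" using that by (intro sum.cong) auto
    finally show ?thesis unfolding s_def .
  qed
  have CF: "map_mat \<pi> A *\<^sub>v col P (s i + k) = (if 0 < k then col P (s i + k - 1) else 0\<^sub>v n)"
    if i: "i < r'" and k: "k < ms ! i" for i k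
  proof -
    have Di: "(i,k) \<in> D" using i k by (simp add: D_iff)
    have sk: "s i + k < n" using jc_bounds[OF Di] s_mono[of "Suc i" r'] i nn unfolding nn_def jc_def
      using k by (simp add: s_Suc)
    have colJ: "col J (s i + k) = (if 0 < k then unit_vec n (s i + k - 1) else 0\<^sub>v n)"
    proof (rule eq_vecI)
      fix a assume "a < dim_vec (if 0 < k then unit_vec n (s i + k - 1) else 0\<^sub>v n)"
      then have a: "a < n" by (cases "0 < k") auto
      have "J $$ (a, s i + k) = (if 0 < k \<and> a = s i + k - 1 then 1 else 0)"
        using jm_col[of i "take r' ms" k a] i k a r'le sI[of i] sJ nn unfolding J_def by simp
      then show "col J (s i + k) $ a = (if 0 < k then unit_vec n (s i + k - 1) else 0\<^sub>v n) $ a"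
        using a sk Jc by (auto simp: unit_vec_def)
    qed (use Jc sk in auto)
    have "map_mat \<pi> A *\<^sub>v col P (s i + k) = col (map_mat \<pi> A * P) (s i + k)"
      using col_mult2[OF piA P sk] by simp
    also have "\<dots> = P *\<^sub>v col J (s i + k)" unfolding AP by (rule col_mult2[OF P Jc sk])
    also have "\<dots> = (if 0 < k then col P (s i + k - 1) else 0\<^sub>v n)"
      unfolding colJ using P sk by (auto simp: mat_unit_vec mat_vec_zero)
    finally show ?thesis .
  qed

  define lift where "lift = inv_into UNIV \<pi>"
  have lift: "\<And>c. \<pi> (lift c) = c" using hsurj unfolding lift_def by (simp add: surj_f_inv_f)
  define vl where "vl p = vec n (\<lambda>a. lift (P $$ (a,p)))" for p
  have vl_car: "vl p \<in> carrier_vec n" for p unfolding vl_def by simp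
  have vl_pi: "map_vec \<pi> (vl p) = col P p" if "p < n" for p
    using that P lift unfolding vl_def by (intro eq_vecI) auto
  have jc0: "jc (i,0) < n" if "i < r'" for i
    using jc_lt[of "(i,0)"] that mpos[OF that] nn by (simp add: D_iff)
  define vs where "vs = map (\<lambda>i. if i < r' then vl (jc (i,0)) else 0\<^sub>v n) [0..<r]"
  have vs_len: "length vs = r" unfolding vs_def by simp
  have vs_nth: "vs ! i = (if i < r' then vl (jc (i,0)) else 0\<^sub>v n)" if "i < r" for i
    unfolding vs_def using that by simp
  have vs_car: "set vs \<subseteq> carrier_vec n" unfolding vs_def using vl_car by auto
  have vs_i: "vs ! i \<in> carrier_vec n" if "i < r" for i using vs_nth[OF that] vl_car by simp
  have r'r: "r' \<le> r" using r'le ms by simp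
  have PI: "j < ms ! i \<longrightarrow> map_vec \<pi> (A ^\<^sub>m j *\<^sub>v vs ! i) = col P (jc (i,j))" if i: "i < r'" for i j
  proof (induct j)
    case 0
    show ?case using A vs_i[of i] i r'r vs_nth[of i] vl_pi[OF jc0[OF i]] by simp
  next
    case (Suc j)
    show ?case
    proof
      assume j: "Suc j < ms ! i"
      have x: "A ^\<^sub>m j *\<^sub>v vs ! i \<in> carrier_vec n" using pow_vec_car[OF A vs_i[of i]] i r'r by simp
      have "A ^\<^sub>m Suc j *\<^sub>v vs ! i = A *\<^sub>v (A ^\<^sub>m j *\<^sub>v vs ! i)"
        using pow_mat_vec_Suc[OF A vs_i[of i]] i r'r by simp
      then have "map_vec \<pi> (A ^\<^sub>m Suc j *\<^sub>v vs ! i) = map_mat \<pi> A *\<^sub>v col P (jc (i,j))"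
        using h.mult_mat_vec_hom[OF A x] Suc j by simp
      also have "jc (i,j) = s i + (ms ! i - 1 - j)" by (simp add: jc_def)
      also have "map_mat \<pi> A *\<^sub>v col P (s i + (ms ! i - 1 - j)) = col P (s i + (ms ! i - 1 - j) - 1)"
        using CF[OF i, of "ms ! i - 1 - j"] j by simp
      also have "s i + (ms ! i - 1 - j) - 1 = jc (i, Suc j)" using j by (simp add: jc_def)
      finally show "map_vec \<pi> (A ^\<^sub>m Suc j *\<^sub>v vs ! i) = col P (jc (i, Suc j))" .
    qed
  qed
  have PI0: "map_vec \<pi> (A ^\<^sub>m (ms ! i) *\<^sub>v vs ! i) = 0\<^sub>v n" if i: "i < r'" for i
  proof -
    obtain j where mj: "ms ! i = Suc j" using mpos[OF i] by (cases "ms ! i") auto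
    have x: "A ^\<^sub>m j *\<^sub>v vs ! i \<in> carrier_vec n" using pow_vec_car[OF A vs_i[of i]] i r'r by simp
    have "A ^\<^sub>m Suc j *\<^sub>v vs ! i = A *\<^sub>v (A ^\<^sub>m j *\<^sub>v vs ! i)"
      using pow_mat_vec_Suc[OF A vs_i[of i]] i r'r by simp
    then have "map_vec \<pi> (A ^\<^sub>m Suc j *\<^sub>v vs ! i) = map_mat \<pi> A *\<^sub>v col P (jc (i,j))"
      using h.mult_mat_vec_hom[OF A x] PI[OF i, of j] mj by simp
    also have "jc (i,j) = s i + 0" using mj by (simp add: jc_def)
    also have "map_mat \<pi> A *\<^sub>v col P (s i + 0) = 0\<^sub>v n" using CF[OF i, of 0] mj by simp
    finally show ?thesis using mj by simp
  qed
  define W where "W = mat nn nn (\<lambda>(a,p). (A ^\<^sub>m (snd (ipos p)) *\<^sub>v (vs ! fst (ipos p))) $ a)"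
  have Wc: "W \<in> carrier_mat n n" unfolding W_def nn by simp
  have ipD: "fst (ipos p) < r' \<and> snd (ipos p) < ms ! fst (ipos p)" if "p < n" for p
    using ipos_D[of p] that nn by (cases "ipos p") (auto simp: D_iff)
  define \<sigma> where "\<sigma> p = (if p < n then jc (ipos p) else p)" for p
  have piW: "map_mat \<pi> W = mat n n (\<lambda>(a,p). P $$ (a, \<sigma> p))"
  proof (rule eq_matI)
    fix a p assume a: "a < dim_row (mat n n (\<lambda>(a,p). P $$ (a, \<sigma> p)))" and p: "p < dim_col (mat n n (\<lambda>(a,p). P $$ (a, \<sigma> p)))"
    then have a: "a < n" and p: "p < n" by auto
    have x: "A ^\<^sub>m snd (ipos p) *\<^sub>v vs ! fst (ipos p) \<in> carrier_vec n" using pow_vec_car[OF A vs_i] ipD[OF p] r'r by simp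
    have "\<pi> ((A ^\<^sub>m snd (ipos p) *\<^sub>v vs ! fst (ipos p)) $ a) = map_vec \<pi> (A ^\<^sub>m snd (ipos p) *\<^sub>v vs ! fst (ipos p)) $ a"
      using carrier_vecD[OF x] a by simp
    also have "\<dots> = col P (jc (ipos p)) $ a" using PI[of "fst (ipos p)" "snd (ipos p)"] ipD[OF p] by simp
    also have "\<dots> = P $$ (a, \<sigma> p)" unfolding \<sigma>_def using p a P jc_lt ipos_D nn by simp
    finally show "map_mat \<pi> W $$ (a,p) = mat n n (\<lambda>(a,p). P $$ (a, \<sigma> p)) $$ (a,p)"
      using a p nn unfolding W_def by simp
  qed (use nn in \<open>auto simp: W_def\<close>)
  have sig_bij: "bij_betw (jc \<circ> ipos) {..<nn} {..<nn}"
  proof (rule bij_betw_trans[OF _ jc_bij])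
    show "bij_betw ipos {..<nn} D" unfolding ipos_def using bij_betw_inv_into[OF pos_bij] .
  qed
  have sig_perm: "\<sigma> permutes {0..<n}"
  proof (rule bij_imp_permutes)
    show "bij_betw \<sigma> {0..<n} {0..<n}"
    proof -
      have "bij_betw \<sigma> {..<nn} {..<nn}"
        by (rule bij_betw_cong[THEN iffD1, OF _ sig_bij]) (auto simp: \<sigma>_def nn)
      then show ?thesis using nn by (simp add: atLeast0LessThan)
    qed
  qed (auto simp: \<sigma>_def)
  have detP: "det P \<noteq> 0"
  proof
    assume "det P = 0"
    then have "det (P * Q) = 0" using det_mult[OF P Q] by simp
    then show False using PQ(2) n' by simp
  qed
  have "det (map_mat \<pi> W) = signof \<sigma> * det P"
    unfolding piW by (rule det_permute_cols[OF P sig_perm])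
  moreover have "(signof \<sigma> :: 'k) \<noteq> 0" by (cases \<sigma> rule: sign_cases) simp_all
  ultimately have "\<pi> (det W) \<noteq> 0" using detP by simp
  then have ndvd: "\<not> of_nat l dvd det W" using hker by simp
  have "det W dvd 1"
  proof -
    have "det W \<noteq> 0" using ndvd by auto
    from Sdvr[OF this] obtain u k where u: "u dvd 1" "det W = u * of_nat l ^ k" by blast
    have "k = 0"
    proof (rule ccontr)
      assume "k \<noteq> 0"
      then have "of_nat l dvd det W" using u(2) by (simp add: dvd_power)
      then show False using ndvd by simp
    qed
    then show ?thesis using u by simp
  qed
  then obtain winv where winv: "1 = det W * winv" by (rule dvdE)
  define W' where "W' = winv \<cdot>\<^sub>m adj_mat W"
  note adjW = adj_mat[OF Wc]
  have W'c: "W' \<in> carrier_mat n n" unfolding W'_def using adjW by simp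
  have WW': "W * W' = 1\<^sub>m n"
  proof -
    have "W * W' = winv \<cdot>\<^sub>m (W * adj_mat W)" unfolding W'_def using Wc adjW by (simp add: mult_smult_distrib)
    also have "\<dots> = 1\<^sub>m n" unfolding adjW(2) using winv by (intro eq_matI) (auto simp: mult.commute)
    finally show ?thesis .
  qed
  have W'W: "W' * W = 1\<^sub>m n"
  proof -
    have "W' * W = winv \<cdot>\<^sub>m (adj_mat W * W)" unfolding W'_def using Wc adjW by (simp add: mult_smult_assoc_mat)
    also have "\<dots> = 1\<^sub>m n" unfolding adjW(3) using winv by (intro eq_matI) (auto simp: mult.commute)
    finally show ?thesis .
  qed
  interpret mctx ms r' A r vs W W'
    by unfold_locales (use A nn ms vs_len vs_car vs_nth mzero W'c WW' W'W in \<open>auto simp: W_def\<close>)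
  have dd_dvd: "of_nat l dvd dd k $ p" if k: "k < r'" and p: "p < n" for k p
  proof -
    have b: "bv k (ms ! k) \<in> carrier_vec n" using bv_car[of k] k r'r nn by simp
    have "map_vec \<pi> (dd k) = map_mat \<pi> W' *\<^sub>v map_vec \<pi> (bv k (ms ! k))"
      unfolding dd_def using h.mult_mat_vec_hom[OF W'c b] .
    also have "map_vec \<pi> (bv k (ms ! k)) = 0\<^sub>v n" unfolding bv_def using PI0[OF k] .
    finally have "map_vec \<pi> (dd k) = 0\<^sub>v n" using W'c by (simp add: mat_vec_zero)
    then have "map_vec \<pi> (dd k) $ p = 0" using p by simp
    moreover have "dd k \<in> carrier_vec n" using dd_car[of k] k r'r nn by simp
    ultimately show ?thesis using p hker by simp
  qed
  obtain Y where Y: "Y \<in> carrier_mat r r" "Y * Xf = f1 \<cdot>\<^sub>m 1\<^sub>m r" using Y_exists R_module nn by auto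
  have cong: "poly_cong_l l (Xf $$ (i, j)) (if i = j then monom 1 (ms ! i) else 0)" if i: "i < r" and j: "j < r" for i j
    unfolding poly_cong_l_def
  proof
    fix k
    have "coeff (Xf $$ (i, j) - (if i = j then monom 1 (ms ! i) else 0)) k
        = - (if i < r' \<and> j < r' \<and> k < ms ! i then dd j $ pos (i,k) else 0)"
      using Xf_coeff[OF i j, of k] by (auto simp: coeff_monom)
    moreover have "of_nat l dvd (if i < r' \<and> j < r' \<and> k < ms ! i then dd j $ pos (i,k) else 0)"
    proof (cases "i < r' \<and> j < r' \<and> k < ms ! i")
      case True
      then have "pos (i,k) < n" using pos_lt[of i k] nn by (simp add: D_iff)
      then show ?thesis using True dd_dvd by simp
    next
      case False
      then show ?thesis by (simp only: if_False dvd_0_right)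
    qed
    ultimately show "of_nat l dvd coeff (Xf $$ (i, j) - (if i = j then monom 1 (ms ! i) else 0)) k" by simp
  qed
  show ?thesis
  proof (intro exI conjI)
    show "Xf \<in> carrier_mat r r" by (rule Xf_car)
    show "Y \<in> carrier_mat r r" "Y * Xf = f1 \<cdot>\<^sub>m 1\<^sub>m r" using Y by auto
    show "det Xf = char_poly A" by (rule det_Xf_char)
    show "length vs = r" by (rule vs_len)
    show "set vs \<subseteq> carrier_vec n" using vs_car nn by simp
    show "\<forall>w\<in>carrier_vec n. \<exists>q\<in>carrier_vec r. w = pres_map A vs q" using gen nn by auto
    show "{q \<in> carrier_vec r. pres_map A vs q = 0\<^sub>v n} = {Xf *\<^sub>v p | p. p \<in> carrier_vec r}" using ker_eq nn by simp
    show "\<forall>i<r. \<forall>j<r. poly_cong_l l (Xf $$ (i, j)) (if i = j then monom 1 (ms ! i) else 0)" using cong by auto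
  qed
qed



end
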